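(* Let $T:\mathbb{T}^d\to\mathbb{T}^d$ be a $C^\infty$ uniformly expanding map with $\gamma:=\inf_{(x,v)\in S\mathbb{T}^d}|D_xT(v)|>1$ and smooth invariant probability density $h>0$, let $\tau\in C^\infty(\mathbb{T}^d,\mathbb{R}^\ell)$, $s<0$, and let $R$, $g$, $\mathcal{F}^n_{\mathbf n,y}$ and $\widetilde p_{\mathbf n,n}$ be as in the context. Let $\mathbf n\in\mathbb{S}^{\ell-1}$. Then: (1) $\widetilde p_{\mathbf n,n}(x,\xi)\le1$ for all $n\in\mathbb{N}$ and $(x,\xi)\in\mathbb{T}^d\times\mathbb{R}^d$; (2) $\widetilde p_{\mathbf n,n}(x,\xi)<1$ if and only if there is $y\in T^{-n}x$ with $|\mathcal{F}^n_{\mathbf n,y}(\xi)|>R$; (3) $\widetilde p_{\mathbf n,n}(x,\xi)\le\left(\frac{\gamma+1}{2}\right)^{2s}<1$ for all $n\in\mathbb{N}$ and all $(x,\xi)$ with $|\xi|>R$.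
   Context: Fix $R>\max\{1,\max\{1,2\|D\tau\|\}/(\gamma-1)\}$ with $\|D\tau\|=\sup_x|D_x\tau|$. Let $g_0\in C^\infty(\mathbb{R}^+)$ with $g_0(t)=1$ for $t\le R$, $g_0(t)=t$ for $t\ge\frac{\gamma+1}{2}R$, and on $[R,\frac{\gamma+1}{2}R)$ $g_0$ strictly increasing with $1\le g_0(t)\le t$; $g(\xi)=g_0(|\xi|)$. $\mathcal{A}_n(y)=\frac{1}{|\mathrm{Jac}(T^n)(y)|}\frac{h(y)}{h(T^ny)}$, $W_n(x)=\sum_{k=0}^{n-1}(D_xT^k)^t(D_{T^kx}\tau)^t$, $\mathcal{F}^n_{\mathbf n,y}(\xi)=(D_yT^n)^t\xi+W_n(y)\mathbf n$, and $\widetilde p_{\mathbf n,n}(x,\xi)=\sum_{T^ny=x}\mathcal{A}_n(y)\left[g(\mathcal{F}^n_{\mathbf n,y}(\xi))/g(\xi)\right]^{2s}$. *)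

theory Defs
  imports "HOL-Analysis.Analysis"
begin

fun dirder :: "'a::real_normed_vector list \<Rightarrow> ('a \<Rightarrow> 'b::real_normed_vector) \<Rightarrow> 'a \<Rightarrow> 'b" where
  "dirder [] f = f"
| "dirder (v # vs) f = (\<lambda>x. frechet_derivative (dirder vs f) (at x) v)"

definition smooth_on :: "'a::real_normed_vector set \<Rightarrow> ('a \<Rightarrow> 'b::real_normed_vector) \<Rightarrow> bool" where
  "smooth_on S f \<longleftrightarrow> open S \<and> (\<forall>vs. \<forall>x\<in>S. dirder vs f differentiable (at x))"

definition int_vec :: "real^'d \<Rightarrow> bool" where
  "int_vec k \<longleftrightarrow> (\<forall>i. k $ i \<in> \<int>)"

definition periodic :: "(real^'d \<Rightarrow> 'b) \<Rightarrow> bool" where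
  "periodic f \<longleftrightarrow> (\<forall>x k. int_vec k \<longrightarrow> f (x + k) = f x)"

text \<open>T : R^d -> R^d is the lift of a map of the torus T^d = R^d / Z^d.\<close>
definition torus_lift :: "(real^'d \<Rightarrow> real^'d) \<Rightarrow> bool" where
  "torus_lift T \<longleftrightarrow> (\<forall>x k. int_vec k \<longrightarrow> int_vec (T (x + k) - T x))"

text \<open>Fundamental domain [0,1)^d, representing the points of the torus.\<close>
definition fund :: "(real^'d) set" where
  "fund = {y. \<forall>i. 0 \<le> y $ i \<and> y $ i < 1}"

text \<open>T^{-n} x, represented in the fundamental domain.\<close>
definition preim :: "(real^'d \<Rightarrow> real^'d) \<Rightarrow> nat \<Rightarrow> real^'d \<Rightarrow> (real^'d) set" where
  "preim T n x = {y \<in> fund. int_vec ((T ^^ n) y - x)}"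

text \<open>Invariance of the measure h(x) dx on the torus under T:
  mu(T^{-1} A) = mu(A) for all Borel sets A of the torus (= Z^d-periodic Borel sets of R^d).\<close>
definition invariant_density :: "(real^'d \<Rightarrow> real^'d) \<Rightarrow> (real^'d \<Rightarrow> real) \<Rightarrow> bool" where
  "invariant_density T h \<longleftrightarrow>
     (\<forall>A \<in> sets borel. (\<forall>x k. int_vec k \<longrightarrow> (x \<in> A \<longleftrightarrow> x + k \<in> A)) \<longrightarrow>
        integral (cbox 0 One) (\<lambda>y. indicator A (T y) * h y)
          = integral (cbox 0 One) (\<lambda>y. indicator A y * h y))"

definition DT :: "(real^'d \<Rightarrow> real^'d) \<Rightarrow> nat \<Rightarrow> real^'d \<Rightarrow> real^'d \<Rightarrow> real^'d" where
  "DT T k y = frechet_derivative (T ^^ k) (at y)"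

definition gamma_exp :: "(real^'d \<Rightarrow> real^'d) \<Rightarrow> real" where
  "gamma_exp T = Inf {norm (frechet_derivative T (at x) v) | x v. norm v = 1}"

definition Dtau_norm :: "(real^'d \<Rightarrow> real^'l) \<Rightarrow> real" where
  "Dtau_norm \<tau> = Sup {onorm (frechet_derivative \<tau> (at x)) | x. True}"

definition A_n :: "(real^'d \<Rightarrow> real^'d) \<Rightarrow> (real^'d \<Rightarrow> real) \<Rightarrow> nat \<Rightarrow> real^'d \<Rightarrow> real" where
  "A_n T h n y = (1 / \<bar>det (matrix (DT T n y))\<bar>) * (h y / h ((T ^^ n) y))"

definition W_n :: "(real^'d \<Rightarrow> real^'d) \<Rightarrow> (real^'d \<Rightarrow> real^'l) \<Rightarrow> nat \<Rightarrow> real^'d \<Rightarrow> real^'l \<Rightarrow> real^'d" where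
  "W_n T \<tau> n x w = (\<Sum>k<n. adjoint (DT T k x) (adjoint (frechet_derivative \<tau> (at ((T ^^ k) x))) w))"

definition F_n :: "(real^'d \<Rightarrow> real^'d) \<Rightarrow> (real^'d \<Rightarrow> real^'l) \<Rightarrow> nat \<Rightarrow> real^'l \<Rightarrow> real^'d \<Rightarrow> real^'d \<Rightarrow> real^'d" where
  "F_n T \<tau> n nn y \<xi> = adjoint (DT T n y) \<xi> + W_n T \<tau> n y nn"

definition p_tilde :: "(real^'d \<Rightarrow> real^'d) \<Rightarrow> (real^'d \<Rightarrow> real) \<Rightarrow> (real^'d \<Rightarrow> real^'l) \<Rightarrow> (real \<Rightarrow> real)
    \<Rightarrow> real \<Rightarrow> real^'l \<Rightarrow> nat \<Rightarrow> real^'d \<Rightarrow> real^'d \<Rightarrow> real" where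
  "p_tilde T h \<tau> g0 s nn n x \<xi> =
     (\<Sum>y\<in>preim T n x. A_n T h n y * (g0 (norm (F_n T \<tau> n nn y \<xi>)) / g0 (norm \<xi>)) powr (2 * s))"

end

theory Submission
  imports Defs
begin

lemma det_shear_fin:
  fixes m n :: "'n::finite"
  assumes "m \<noteq> n"
  shows "det (matrix (\<lambda>v::real^'n. \<chi> i. if i = m then v $ m + v $ n else v $ i)) = 1"
proof -
  have "matrix (\<lambda>v::real^'n. \<chi> i. if i = m then v $ m + v $ n else v $ i)
      = (\<chi> k. if k = m then row m (mat 1) + 1 *s row n (mat 1) else row k (mat 1 :: real^'n^'n))"
    by (auto simp: matrix_def vec_eq_iff row_def mat_def axis_def)
  then show ?thesis using det_row_operation[OF assms, of "mat 1 :: real^'n^'n" 1] by simp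
qed

proposition
 fixes f :: "real^'n::finite \<Rightarrow> real^'n"
  assumes "linear f" "S \<in> lmeasurable"
  shows measurable_linear_image_fin: "(f ` S) \<in> lmeasurable"
    and measure_linear_image_fin: "measure lebesgue (f ` S) = \<bar>det (matrix f)\<bar> * measure lebesgue S" (is "?Q f S")
proof -
  have "\<forall>S \<in> lmeasurable. (f ` S) \<in> lmeasurable \<and> ?Q f S"
  proof (rule induct_linear_elementary [OF \<open>linear f\<close>]; intro ballI)
    fix f g and S :: "(real,'n) vec set"
    assume "linear f" and "linear g"
      and f [rule_format]: "\<forall>S \<in> lmeasurable. f ` S \<in> lmeasurable \<and> ?Q f S"
      and g [rule_format]: "\<forall>S \<in> lmeasurable. g ` S \<in> lmeasurable \<and> ?Q g S"
      and S: "S \<in> lmeasurable"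
    then have gS: "g ` S \<in> lmeasurable"
      by blast
    show "(f \<circ> g) ` S \<in> lmeasurable \<and> ?Q (f \<circ> g) S"
      using f [OF gS] g [OF S] matrix_compose [OF \<open>linear g\<close> \<open>linear f\<close>]
      by (simp add: o_def image_comp abs_mult det_mul)
  next
    fix f :: "real^'n::_ \<Rightarrow> real^'n::_" and i and S :: "(real^'n::_) set"
    assume "linear f" and 0: "\<And>x. f x $ i = 0" and "S \<in> lmeasurable"
    then have "\<not> inj f"
      by (metis (full_types) linear_injective_imp_surjective one_neq_zero surjE vec_component)
    have detf: "det (matrix f) = 0"
      using \<open>\<not> inj f\<close> det_nz_iff_inj[OF \<open>linear f\<close>] by blast
    show "f ` S \<in> lmeasurable \<and> ?Q f S"
    proof
      show "f ` S \<in> lmeasurable"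
        using lmeasurable_iff_indicator_has_integral \<open>linear f\<close> \<open>\<not> inj f\<close> negligible_UNIV negligible_linear_singular_image by blast
      have "measure lebesgue (f ` S) = 0"
        by (meson \<open>\<not> inj f\<close> \<open>linear f\<close> negligible_imp_measure0 negligible_linear_singular_image)
      also have "\<dots> = \<bar>det (matrix f)\<bar> * measure lebesgue S"
        by (simp add: detf)
      finally show "?Q f S" .
    qed
  next
    fix c and S :: "(real^'n::_) set"
    assume "S \<in> lmeasurable"
    show "(\<lambda>a. \<chi> i. c i * a $ i) ` S \<in> lmeasurable \<and> ?Q (\<lambda>a. \<chi> i. c i * a $ i) S"
    proof
      show "(\<lambda>a. \<chi> i. c i * a $ i) ` S \<in> lmeasurable"
        by (simp add: \<open>S \<in> lmeasurable\<close> measurable_stretch)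
      show "?Q (\<lambda>a. \<chi> i. c i * a $ i) S"
        by (simp add: measure_stretch [OF \<open>S \<in> lmeasurable\<close>, of c] axis_def matrix_def det_diagonal)
    qed
  next
    fix m :: "'n" and n :: "'n" and S :: "(real, 'n) vec set"
    assume "m \<noteq> n" and "S \<in> lmeasurable"
    let ?h = "\<lambda>v::(real, 'n) vec. \<chi> i. v $ Transposition.transpose m n i"
    have lin: "linear ?h"
      by (rule linearI) (simp_all add: plus_vec_def scaleR_vec_def)
    have meq: "measure lebesgue ((\<lambda>v::(real, 'n) vec. \<chi> i. v $ Transposition.transpose m n i) ` cbox a b)
             = measure lebesgue (cbox a b)" for a b
    proof (cases "cbox a b = {}")
      case True then show ?thesis
        by simp
    next
      case False
      then have him: "?h ` (cbox a b) \<noteq> {}"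
        by blast
      have eq: "?h ` (cbox a b) = cbox (?h a) (?h b)"
        by (auto simp: image_iff lambda_swap_Galois mem_box_cart) (metis transpose_involutory)+
      show ?thesis
        using him prod.permute [OF permutes_swap_id, where S=UNIV and g="\<lambda>i. (b - a)$i", symmetric]
        by (simp add: eq content_cbox_cart False)
    qed
    have "(\<chi> i j. if Transposition.transpose m n i = j then 1 else 0) = (\<chi> i j. if j = Transposition.transpose m n i then 1 else (0::real))"
      by (auto intro!: Cart_lambda_cong)
    then have "matrix ?h = transpose(\<chi> i j. mat 1 $ i $ Transposition.transpose m n j)"
      by (auto simp: matrix_eq transpose_def axis_def mat_def matrix_def)
    then have 1: "\<bar>det (matrix ?h)\<bar> = 1"
      by (simp add: det_permute_columns permutes_swap_id sign_swap_id abs_mult)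
    show "?h ` S \<in> lmeasurable \<and> ?Q ?h S"
      using measure_linear_sufficient [OF lin \<open>S \<in> lmeasurable\<close>] meq 1 by force
  next
    fix m n :: "'n" and S :: "(real, 'n) vec set"
    assume "m \<noteq> n" and "S \<in> lmeasurable"
    let ?h = "\<lambda>v::(real, 'n) vec. \<chi> i. if i = m then v $ m + v $ n else v $ i"
    have lin: "linear ?h"
      by (rule linearI) (auto simp: algebra_simps plus_vec_def scaleR_vec_def vec_eq_iff)
    have 1: "det(matrix ?h) = 1"
      using det_shear_fin[OF \<open>m \<noteq> n\<close>] .
    have meq: "measure lebesgue (?h ` (cbox a b)) = measure lebesgue (cbox a b)" for a b
    proof (cases "cbox a b = {}")
      case True then show ?thesis by simp
    next
      case False
      then have ne: "(+) (\<chi> i. if i = n then - a $ n else 0) ` cbox a b \<noteq> {}"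
        by auto
      let ?v = "\<chi> i. if i = n then - a $ n else 0"
      have "?h ` cbox a b
            = (+) (\<chi> i. if i = m \<or> i = n then a $ n else 0) ` ?h ` (+) ?v ` (cbox a b)"
        using \<open>m \<noteq> n\<close> unfolding image_comp o_def by (force simp: vec_eq_iff)
      then have "measure lebesgue (?h ` (cbox a b))
               = measure lebesgue ((\<lambda>v. \<chi> i. if i = m then v $ m + v $ n else v $ i) `
                                   (+) ?v ` cbox a b)"
        by (rule ssubst) (rule measure_translation)
      also have "\<dots> = measure lebesgue ((\<lambda>v. \<chi> i. if i = m then v $ m + v $ n else v $ i) ` cbox (?v +a) (?v + b))"
        by (metis (no_types, lifting) cbox_translation)
      also have "\<dots> = measure lebesgue ((+) ?v ` cbox a b)"
        apply (subst measure_shear_interval)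
        using \<open>m \<noteq> n\<close> ne apply auto
        apply (simp add: cbox_translation)
        by (metis cbox_borel cbox_translation measure_completion sets_lborel)
      also have "\<dots> = measure lebesgue (cbox a b)"
        by (rule measure_translation)
        finally show ?thesis .
      qed
    show "?h ` S \<in> lmeasurable \<and> ?Q ?h S"
      using measure_linear_sufficient [OF lin \<open>S \<in> lmeasurable\<close>] meq 1 by force
  qed
  with assms show "(f ` S) \<in> lmeasurable" "?Q f S"
    by metis+
qed


definition flo :: "real^'d \<Rightarrow> real^'d" where
  "flo x = (\<chi> i. of_int \<lfloor>x$i\<rfloor>)"

lemma int_vec_add[intro]: "int_vec a \<Longrightarrow> int_vec b \<Longrightarrow> int_vec (a + b)"
  by (auto simp: int_vec_def)
lemma int_vec_diff[intro]: "int_vec a \<Longrightarrow> int_vec b \<Longrightarrow> int_vec (a - b)"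
  by (auto simp: int_vec_def)
lemma int_vec_minus[intro]: "int_vec a \<Longrightarrow> int_vec (- a)"
  by (auto simp: int_vec_def)
lemma int_vec_0[simp,intro]: "int_vec 0"
  by (auto simp: int_vec_def)
lemma int_vec_flo[simp,intro]: "int_vec (flo x)"
  by (auto simp: int_vec_def flo_def)

lemma One_cart_nth: "(One::real^'d) $ i = 1"
proof -
  have "One \<bullet> (axis i 1 :: real^'d) = 1"
    by (rule inner_sum_Basis) (simp add: axis_in_Basis_iff)
  then show ?thesis by (simp add: cart_eq_inner_axis)
qed

lemma sum_Basis_cart_nth[simp]: "(\<Sum>x\<in>(Basis::(real^'d) set). x $ i) = 1"
  using One_cart_nth[of i] by simp

lemma Ints_small: "(z::real) \<in> \<int> \<Longrightarrow> \<bar>z\<bar> < 1 \<Longrightarrow> z = 0"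
  by (auto elim!: Ints_cases)

lemma int_vec_small: "int_vec k \<Longrightarrow> norm k < 1 \<Longrightarrow> k = 0"
proof -
  assume k: "int_vec k" "norm k < 1"
  show "k = 0"
  proof (rule vec_eq_iff[THEN iffD2], rule allI)
    fix i
    have "\<bar>k$i\<bar> < 1" using component_le_norm_cart[of k i] k(2) by simp
    moreover have "k$i \<in> \<int>" using k(1) by (auto simp: int_vec_def)
    ultimately show "k$i = 0$i"
      using Ints_small by simp
  qed
qed

lemma flo_fund: "x - flo x \<in> fund"
  using frac_lt_1 by (auto simp: fund_def flo_def frac_def)

lemma fund_unique: "y \<in> fund \<Longrightarrow> y + k \<in> fund \<Longrightarrow> int_vec k \<Longrightarrow> k = 0"
proof -
  assume a: "y \<in> fund" "y + k \<in> fund" "int_vec k"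
  show "k = 0"
  proof (rule vec_eq_iff[THEN iffD2], rule allI)
    fix i
    have "\<bar>k$i\<bar> < 1" using a(1,2) by (auto simp: fund_def dest!: spec[of _ i])
    moreover have "k$i \<in> \<int>" using a(3) by (auto simp: int_vec_def)
    ultimately show "k$i = 0$i"
      using Ints_small by simp
  qed
qed

lemma fund_iff_flo: "int_vec k \<Longrightarrow> (x - k \<in> fund \<longleftrightarrow> k = flo x)"
proof
  assume k: "int_vec k" and "x - k \<in> fund"
  have "(x - k) + (k - flo x) = x - flo x" by simp
  then have "k - flo x = 0"
    using fund_unique[OF \<open>x - k \<in> fund\<close>, of "k - flo x"] flo_fund[of x] k by auto
  then show "k = flo x" by simp
qed (use flo_fund in auto)

lemma fund_norm: "y \<in> fund \<Longrightarrow> norm y \<le> real CARD('d)" for y :: "real^'d"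
proof -
  assume y: "y \<in> fund"
  have "norm y \<le> (\<Sum>i\<in>UNIV. \<bar>y$i\<bar>)" by (rule norm_le_l1_cart)
  also have "\<dots> \<le> (\<Sum>i\<in>(UNIV::'d set). 1)"
  proof (rule sum_mono)
    fix i show "\<bar>y$i\<bar> \<le> 1" using y unfolding fund_def by (auto dest!: spec[of _ i])
  qed
  finally show ?thesis by simp
qed

lemma fund_sub_cbox: "fund \<subseteq> cbox 0 One"
  by (auto simp: fund_def mem_box_cart less_imp_le)

lemma fund_borel[measurable]: "(fund::(real^'d) set) \<in> sets borel"
proof -
  have "fund = (\<Inter>i. {y::real^'d. 0 \<le> y$i} \<inter> {y. y$i < 1})"
    by (auto simp: fund_def)
  also have "\<dots> \<in> sets borel"
  proof (rule sets.countable_INT'', simp, simp, rule sets.Int)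
    fix i :: 'd
    show "{y::real^'d. 0 \<le> y$i} \<in> sets borel"
      by (rule borel_closed, rule closed_Collect_le) (auto intro: continuous_intros)
    show "{y::real^'d. y$i < 1} \<in> sets borel"
      by (rule borel_open, rule open_Collect_less) (auto intro: continuous_intros)
  qed
  finally show ?thesis .
qed

lemma finite_int_bounded: "finite {k::real^'d. int_vec k \<and> norm k \<le> B}"
proof -
  let ?N = "\<lceil>B\<rceil>"
  have "{k::real^'d. int_vec k \<and> norm k \<le> B} \<subseteq> (\<lambda>f. \<chi> i. of_int (f i)) ` (PiE UNIV (\<lambda>_. {-?N..?N}))"
  proof
    fix k :: "real^'d" assume k: "k \<in> {k. int_vec k \<and> norm k \<le> B}"
    let ?f = "\<lambda>i. \<lfloor>k$i\<rfloor>"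
    have ki: "of_int (?f i) = k$i" for i
    proof -
      have "k$i \<in> \<int>" using k by (auto simp: int_vec_def)
      then show ?thesis by (auto elim!: Ints_cases)
    qed
    have "\<bar>k$i\<bar> \<le> B" for i using component_le_norm_cart[of k i] k by auto
    then have "?f i \<in> {-?N..?N}" for i
    proof -
      have "-B \<le> k$i" "k$i \<le> B" using \<open>\<bar>k$i\<bar> \<le> B\<close> by auto
      then have "-?N \<le> ?f i" "?f i \<le> ?N"
        using le_of_int_ceiling[of B] by (auto simp: le_floor_iff floor_le_iff) linarith+
      then show ?thesis by auto
    qed
    then have f1: "?f \<in> PiE UNIV (\<lambda>_. {-?N..?N})" by auto
    have f2: "k = (\<chi> i. of_int (?f i))" unfolding vec_eq_iff using ki by (metis vec_lambda_beta)
    show "k \<in> (\<lambda>f. \<chi> i. of_int (f i)) ` (PiE UNIV (\<lambda>_. {-?N..?N}))"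
      apply (rule rev_image_eqI[OF f1]) using f2 by simp
  qed
  moreover have "finite (PiE (UNIV::'d set) (\<lambda>_. {-?N..?N}))"
    by (intro finite_PiE) auto
  ultimately show ?thesis using finite_subset by blast
qed

lemma closed_int_vec: "closed {k::real^'d. int_vec k}"
proof -
  have "{k::real^'d. int_vec k} = (\<Inter>i. (\<lambda>x. x$i) -` \<int>)"
    by (auto simp: int_vec_def)
  moreover have "closed ((\<lambda>x::real^'d. x$i) -` \<int>)" for i
    by (intro continuous_closed_vimage closed_Ints) (auto intro: continuous_intros)
  ultimately show ?thesis by auto
qed

lemma nn_integral_translate:
  fixes f :: "real^'d \<Rightarrow> ennreal"
  assumes [measurable]: "f \<in> borel_measurable borel"
  shows "(\<integral>\<^sup>+x. f x \<partial>lborel) = (\<integral>\<^sup>+x. f (k + x) \<partial>lborel)"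
proof -
  have "(\<integral>\<^sup>+x. f x \<partial>lborel) = (\<integral>\<^sup>+x. f x \<partial>distr lborel borel ((+) k))"
    by (simp add: lborel_distr_plus)
  also have "\<dots> = (\<integral>\<^sup>+x. f (k + x) \<partial>lborel)"
    by (subst nn_integral_distr) auto
  finally show ?thesis .
qed


lemma fold_lemma:
  fixes G :: "real^'d \<Rightarrow> ennreal" and E :: "(real^'d) set"
  assumes Gm[measurable]: "G \<in> borel_measurable borel" and Gper: "\<And>x k. int_vec k \<Longrightarrow> G (x + k) = G x"
   and Eb[measurable]: "E \<in> sets borel" and Ebd: "bounded E"
   and disj: "\<And>x k. x \<in> E \<Longrightarrow> x + k \<in> E \<Longrightarrow> int_vec k \<Longrightarrow> k = 0"
   and supp: "\<And>x. G x \<noteq> 0 \<Longrightarrow> \<exists>k. int_vec k \<and> x + k \<in> E"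
  shows "(\<integral>\<^sup>+x. G x * indicator fund x \<partial>lborel) = (\<integral>\<^sup>+x. G x * indicator E x \<partial>lborel)"
proof -
  obtain B where B: "\<And>x. x \<in> E \<Longrightarrow> norm x \<le> B" using Ebd bounded_iff by blast
  define K where "K = {k::real^'d. int_vec k \<and> norm k \<le> B + real CARD('d)}"
  have fK: "finite K" unfolding K_def by (rule finite_int_bounded)
  have Kint: "\<And>k. k \<in> K \<Longrightarrow> int_vec k" by (auto simp: K_def)
  have flo_K: "flo x \<in> K" if "x \<in> E" for x
  proof -
    have "norm (flo x) = norm (x - (x - flo x))" by simp
    also have "\<dots> \<le> norm x + norm (x - flo x)" by (rule norm_triangle_ineq4)
    also have "\<dots> \<le> B + real CARD('d)" using B[OF that] fund_norm[OF flo_fund[of x]] by simp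
    finally show ?thesis by (auto simp: K_def)
  qed
  have a: "G x * indicator E x = (\<Sum>k\<in>K. G x * indicator E x * indicator fund (x - k))" for x
  proof (cases "x \<in> E")
    case True
    have "(\<Sum>k\<in>K. G x * indicator E x * indicator fund (x - k)) = (\<Sum>k\<in>K. if k = flo x then G x else 0)"
      by (rule sum.cong) (use True fund_iff_flo[OF Kint] in \<open>auto simp: indicator_def\<close>)
    also have "\<dots> = G x" using flo_K[OF True] using fK by (simp add: sum.delta)
    finally show ?thesis using True by simp
  qed simp
  have "(\<integral>\<^sup>+x. G x * indicator E x \<partial>lborel) = (\<integral>\<^sup>+x. (\<Sum>k\<in>K. G x * indicator E x * indicator fund (x - k)) \<partial>lborel)"
    using a by simp
  also have "\<dots> = (\<Sum>k\<in>K. \<integral>\<^sup>+x. G x * indicator E x * indicator fund (x - k) \<partial>lborel)"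
    by (rule nn_integral_sum) auto
  also have "\<dots> = (\<Sum>k\<in>K. \<integral>\<^sup>+x. G x * indicator E (x + k) * indicator fund x \<partial>lborel)"
  proof (rule sum.cong[OF refl])
    fix k assume k: "k \<in> K"
    have "(\<integral>\<^sup>+x. G x * indicator E x * indicator fund (x - k) \<partial>lborel)
        = (\<integral>\<^sup>+x. G (k + x) * indicator E (k + x) * indicator fund (k + x - k) \<partial>lborel)"
      by (rule nn_integral_translate) auto
    also have "\<dots> = (\<integral>\<^sup>+x. G x * indicator E (x + k) * indicator fund x \<partial>lborel)"
      using Gper[OF Kint[OF k]] by (simp add: add.commute)
    finally show "(\<integral>\<^sup>+x. G x * indicator E x * indicator fund (x - k) \<partial>lborel)
        = (\<integral>\<^sup>+x. G x * indicator E (x + k) * indicator fund x \<partial>lborel)" .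
  qed
  also have "\<dots> = (\<integral>\<^sup>+x. (\<Sum>k\<in>K. G x * indicator E (x + k) * indicator fund x) \<partial>lborel)"
    by (rule nn_integral_sum[symmetric]) auto
  also have "\<dots> = (\<integral>\<^sup>+x. G x * indicator fund x \<partial>lborel)"
  proof (rule nn_integral_cong)
    fix x
    show "(\<Sum>k\<in>K. G x * indicator E (x + k) * indicator fund x) = G x * indicator fund x"
    proof (cases "G x = 0 \<or> x \<notin> fund")
      case True then show ?thesis by auto
    next
      case False
      then have Gx: "G x \<noteq> 0" and xf: "x \<in> fund" by auto
      obtain k0 where k0: "int_vec k0" "x + k0 \<in> E" using supp[OF Gx] by blast
      have k0K: "k0 \<in> K"
      proof -
        have "norm k0 = norm ((x + k0) - x)" by simp
        also have "\<dots> \<le> norm (x + k0) + norm x" by (rule norm_triangle_ineq4)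
        also have "\<dots> \<le> B + real CARD('d)" using B[OF k0(2)] fund_norm[OF xf] by simp
        finally show ?thesis using k0 by (auto simp: K_def)
      qed
      have ind: "indicator E (x + k) = (if k = k0 then 1 else (0::ennreal))" if "k \<in> K" for k
      proof (cases "x + k \<in> E")
        case True
        have "(x + k0) + (k - k0) = x + k" by simp
        then have "k - k0 = 0" using disj[OF k0(2), of "k - k0"] True Kint[OF that] k0(1) by auto
        then show ?thesis using True by simp
      next
        case False then show ?thesis using k0 by auto
      qed
      have "(\<Sum>k\<in>K. G x * indicator E (x + k) * indicator fund x) = (\<Sum>k\<in>K. if k = k0 then G x * indicator fund x else 0)"
        by (rule sum.cong) (auto simp: ind)
      also have "\<dots> = G x * indicator fund x" using k0K using fK by (simp add: sum.delta)
      finally show ?thesis .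
    qed
  qed
  finally show ?thesis ..
qed


lemma AE_cube_fund: "AE x in lborel. indicator (cbox (0::real^'d) One) x = (indicator fund x :: ennreal)"
proof -
  let ?N = "\<Union>i. {x::real^'d. x$i = 1}"
  have Ni: "{x::real^'d. x$i = 1} \<in> null_sets lborel" for i
  proof -
    have "{x::real^'d. x$i = 1} = {x. axis i 1 \<bullet> x = 1}"
      by (auto simp: cart_eq_inner_axis inner_commute)
    then have "negligible {x::real^'d. x$i = 1}"
      using negligible_hyperplane[of "axis i (1::real)" 1] by (simp add: axis_eq_0_iff)
    then have "{x::real^'d. x$i = 1} \<in> null_sets lebesgue" by (simp add: negligible_iff_null_sets)
    moreover have "{x::real^'d. x$i = 1} \<in> sets borel"
      by (rule borel_closed, rule closed_Collect_eq) (auto intro: continuous_intros)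
    ultimately show ?thesis by (metis null_sets_completion_iff sets_lborel)
  qed
  have "?N \<in> null_sets lborel" using Ni by auto
  moreover have "{x. \<not> (indicator (cbox (0::real^'d) One) x = (indicator fund x :: ennreal))} \<subseteq> ?N"
  proof
    fix x :: "real^'d"
    assume a: "x \<in> {x. \<not> (indicator (cbox (0::real^'d) One) x = (indicator fund x :: ennreal))}"
    then have "x \<in> cbox 0 One" "x \<notin> fund" using fund_sub_cbox by (auto simp: indicator_def of_bool_def split: if_splits)
    then obtain i where "\<not> (0 \<le> x$i \<and> x$i < 1)" by (auto simp: fund_def)
    moreover have "0 \<le> x$i \<and> x$i \<le> 1" using \<open>x \<in> cbox 0 One\<close> by (simp add: mem_box_cart One_cart_nth)
    ultimately have "x$i = 1" by auto
    then show "x \<in> ?N" by auto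
  qed
  ultimately show ?thesis by (intro AE_I'[of ?N]) auto
qed

lemma cube_nn:
  fixes f :: "real^'d \<Rightarrow> real"
  assumes fm[measurable]: "f \<in> borel_measurable borel" and nn: "\<And>x. 0 \<le> f x"
    and bd: "\<And>x. x \<in> cbox 0 One \<Longrightarrow> f x \<le> C"
  shows "ennreal (integral (cbox 0 One) f) = (\<integral>\<^sup>+x. ennreal (f x) * indicator fund x \<partial>lborel)"
proof -
  have "(\<integral>\<^sup>+x. ennreal (f x) * indicator (cbox 0 One) x \<partial>lborel) \<le> (\<integral>\<^sup>+x. ennreal C * indicator (cbox (0::real^'d) One) x \<partial>lborel)"
    apply (rule nn_integral_mono) using bd by (auto simp: indicator_def ennreal_leI)
  also have "\<dots> = ennreal C * emeasure lborel (cbox (0::real^'d) One)"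
    by (rule nn_integral_cmult_indicator) auto
  also have "\<dots> < \<infinity>" by (simp add: ennreal_mult_less_top)
  finally have fin: "(\<integral>\<^sup>+x\<in>cbox 0 One. f x \<partial>lborel) < \<infinity>" by (simp add: mult.commute)
  have "(\<integral>\<^sup>+x\<in>cbox 0 One. f x \<partial>lborel) = integral (cbox 0 One) f"
    by (rule set_nn_integral_lborel_eq_integral) (use fin nn in \<open>auto simp: set_borel_measurable_def\<close>)
  then have "ennreal (integral (cbox 0 One) f) = (\<integral>\<^sup>+x. ennreal (f x) * indicator (cbox 0 One) x \<partial>lborel)"
    by (simp add: mult.commute)
  also have "\<dots> = (\<integral>\<^sup>+x. ennreal (f x) * indicator fund x \<partial>lborel)"
    by (rule nn_integral_cong_AE) (use AE_cube_fund in \<open>auto elim: AE_mp\<close>)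
  finally show ?thesis .
qed


locale PFsetup =
  fixes S :: "real^'d \<Rightarrow> real^'d" and S' :: "real^'d \<Rightarrow> real^'d \<Rightarrow> real^'d" and h :: "real^'d \<Rightarrow> real"
  assumes Sder: "\<And>y. (S has_derivative S' y) (at y)"
    and S'inj: "\<And>y v. S' y v = 0 \<Longrightarrow> v = 0"
    and Slift: "\<And>x k. int_vec k \<Longrightarrow> int_vec (S (x + k) - S x)"
    and hcont: "continuous_on UNIV h"
    and hper: "\<And>x k. int_vec k \<Longrightarrow> h (x + k) = h x"
    and hpos: "\<And>x. 0 < h x"
begin

lemma S_cont: "continuous_on UNIV S"
  using Sder has_derivative_continuous continuous_at_imp_continuous_on by blast

lemma S'_lin: "linear (S' y)"
  using Sder[of y] has_derivative_bounded_linear bounded_linear.linear by blast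

lemma S'_below: obtains \<beta> where "\<beta> > 0" "\<And>v. \<beta> * norm v \<le> norm (S' y v)"
proof -
  have "inj (S' y)" using S'_lin linear_injective_0 S'inj by blast
  then show ?thesis using linear_inj_bounded_below_pos[OF S'_lin] that by blast
qed

lemma S'_above: obtains B where "B > 0" "\<And>v. norm (S' y v) \<le> B * norm v"
proof -
  have "bounded_linear (S' y)" using Sder[of y] has_derivative_bounded_linear by blast
  then show ?thesis using bounded_linear.pos_bounded that by (metis mult.commute)
qed

lemma good:
  assumes "0 < \<theta>"
  obtains \<delta> where "\<delta> > 0" "\<And>u. dist u y < \<delta> \<Longrightarrow>
       norm (S u - S y - S' y (u - y)) \<le> \<theta> * norm (S' y (u - y))"
proof -
  obtain \<beta> where b: "\<beta> > 0" "\<And>v. \<beta> * norm v \<le> norm (S' y v)" using S'_below by blast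
  obtain \<delta> where d: "\<delta> > 0" "\<And>u. norm (u - y) < \<delta> \<Longrightarrow> norm (S u - S y - S' y (u - y)) \<le> (\<theta> * \<beta>) * norm (u - y)"
    using Sder[of y] unfolding has_derivative_at_alt using assms b(1) by (meson mult_pos_pos)
  show ?thesis
  proof (rule that[OF d(1)])
    fix u assume "dist u y < \<delta>"
    then have "norm (S u - S y - S' y (u - y)) \<le> (\<theta> * \<beta>) * norm (u - y)" using d(2) by (simp add: dist_norm)
    also have "\<dots> = \<theta> * (\<beta> * norm (u - y))" by simp
    also have "\<dots> \<le> \<theta> * norm (S' y (u - y))" using b(2) assms by (intro mult_left_mono) auto
    finally show "norm (S u - S y - S' y (u - y)) \<le> \<theta> * norm (S' y (u - y))" .
  qed
qed

lemma good2:
  assumes "0 < \<theta>"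
  obtains \<delta> where "\<delta> > 0" "\<And>u. dist u y < \<delta> \<Longrightarrow>
       (1 - \<theta>) * norm (S' y (u - y)) \<le> norm (S u - S y) \<and> norm (S u - S y) \<le> (1 + \<theta>) * norm (S' y (u - y))"
proof -
  obtain \<delta> where d: "\<delta> > 0" "\<And>u. dist u y < \<delta> \<Longrightarrow> norm (S u - S y - S' y (u - y)) \<le> \<theta> * norm (S' y (u - y))"
    using good[OF assms] by blast
  show ?thesis
  proof (rule that[OF d(1)])
    fix u assume u: "dist u y < \<delta>"
    have "norm (S' y (u - y)) \<le> norm (S u - S y) + norm (S u - S y - S' y (u - y))"
      by (metis add.commute diff_add_cancel norm_triangle_ineq4 order_trans add_le_cancel_left norm_minus_commute norm_triangle_sub)
    then have 1: "(1 - \<theta>) * norm (S' y (u - y)) \<le> norm (S u - S y)" using d(2)[OF u] by (simp add: algebra_simps)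
    have "norm (S u - S y) \<le> norm (S' y (u - y)) + norm (S u - S y - S' y (u - y))"
      by (metis add.commute diff_add_cancel norm_triangle_ineq)
    then have 2: "norm (S u - S y) \<le> (1 + \<theta>) * norm (S' y (u - y))" using d(2)[OF u] by (simp add: algebra_simps)
    show "(1 - \<theta>) * norm (S' y (u - y)) \<le> norm (S u - S y) \<and> norm (S u - S y) \<le> (1 + \<theta>) * norm (S' y (u - y))"
      using 1 2 by blast
  qed
qed

lemma lip_near:
  obtains \<delta> C where "\<delta> > 0" "C > 0" "\<And>u. dist u y < \<delta> \<Longrightarrow> norm (S u - S y) \<le> C * dist u y"
proof -
  obtain \<delta> where d: "\<delta> > 0" "\<And>u. dist u y < \<delta> \<Longrightarrow>
       (1 - 1/2) * norm (S' y (u - y)) \<le> norm (S u - S y) \<and> norm (S u - S y) \<le> (1 + 1/2) * norm (S' y (u - y))"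
    using good2[of "1/2" y] by auto
  obtain B where B: "B > 0" "\<And>v. norm (S' y v) \<le> B * norm v" using S'_above by blast
  show ?thesis
  proof (rule that[OF d(1), of "3/2 * B"])
    show "0 < 3/2 * B" using B by simp
    fix u assume u: "dist u y < \<delta>"
    have "norm (S u - S y) \<le> (3/2) * norm (S' y (u - y))" using d(2)[OF u] by simp
    also have "\<dots> \<le> (3/2) * (B * norm (u - y))" using B(2) by simp
    finally show "norm (S u - S y) \<le> 3/2 * B * dist u y" by (simp add: dist_norm)
  qed
qed

lemma iso: obtains \<delta> where "\<delta> > 0" "\<And>u. dist u y < \<delta> \<Longrightarrow> int_vec (S u - S y) \<Longrightarrow> u = y"
proof -
  obtain \<delta>1 where d1: "\<delta>1 > 0" "\<And>u. dist u y < \<delta>1 \<Longrightarrow>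
       (1 - 1/2) * norm (S' y (u - y)) \<le> norm (S u - S y) \<and> norm (S u - S y) \<le> (1 + 1/2) * norm (S' y (u - y))"
    using good2[of "1/2" y] by auto
  obtain \<delta>2 C where d2: "\<delta>2 > 0" "C > 0" "\<And>u. dist u y < \<delta>2 \<Longrightarrow> norm (S u - S y) \<le> C * dist u y"
    using lip_near by blast
  define \<delta> where "\<delta> = min \<delta>1 (min \<delta>2 (1 / (2 * C)))"
  have dpos: "\<delta> > 0" using d1 d2 by (simp add: \<delta>_def)
  show ?thesis
  proof (rule that[OF dpos])
    fix u assume u: "dist u y < \<delta>" and iv: "int_vec (S u - S y)"
    have "norm (S u - S y) \<le> C * dist u y" using d2(3) u by (simp add: \<delta>_def)
    also have "\<dots> < C * (1 / (2 * C))" using u d2(2) by (intro mult_strict_left_mono) (auto simp: \<delta>_def)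
    also have "\<dots> < 1" using d2(2) by simp
    finally have "S u - S y = 0" using int_vec_small iv by blast
    then have "(1 - 1/2) * norm (S' y (u - y)) \<le> 0" using d1(2)[of u] u by (simp add: \<delta>_def)
    then have "S' y (u - y) = 0" by simp
    then show "u = y" using S'inj by force
  qed
qed

definition Pre :: "real^'d \<Rightarrow> (real^'d) set" where
  "Pre x = {y \<in> fund. int_vec (S y - x)}"

lemma closed_Q: "closed {q. int_vec (S q - x)}"
proof -
  have "{q. int_vec (S q - x)} = (\<lambda>q. S q - x) -` {k. int_vec k}" by auto
  moreover have "continuous_on UNIV (\<lambda>q. S q - x)" using S_cont by (intro continuous_intros) auto
  ultimately show ?thesis using closed_int_vec by (metis closed_vimage)
qed

lemma finite_Pre: "finite (Pre x)"
proof (rule ccontr)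
  assume inf: "infinite (Pre x)"
  have "Pre x \<subseteq> cbox 0 One" using fund_sub_cbox by (auto simp: Pre_def)
  then obtain y where y: "y \<in> cbox 0 One" "y islimpt Pre x"
    using compact_cbox[of "0::real^'d" One] inf unfolding compact_eq_Bolzano_Weierstrass by blast
  have "y islimpt {q. int_vec (S q - x)}" using y(2) by (rule islimpt_subset) (auto simp: Pre_def)
  then have yQ: "int_vec (S y - x)" using closed_Q[of x] closed_limpt by blast
  obtain \<delta> where d: "\<delta> > 0" "\<And>u. dist u y < \<delta> \<Longrightarrow> int_vec (S u - S y) \<Longrightarrow> u = y" using iso by blast
  obtain p where p: "p \<in> Pre x" "p \<noteq> y" "dist p y < \<delta>" using y(2) d(1) islimpt_approachable by blast
  have "int_vec (S p - S y)" using p(1) yQ int_vec_diff[of "S p - x" "S y - x"] by (auto simp: Pre_def)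
  then show False using d(2) p by blast
qed

end


lemma measure_In:
  fixes L :: "real^'d \<Rightarrow> real^'d"
  assumes lin: "linear L" and inj: "inj L" and a: "0 \<le> a"
  shows "measure lborel {u. norm (L (u - y)) < a} = measure lborel (ball (0::real^'d) a) / \<bar>det (matrix L)\<bar>"
    and "{u. norm (L (u - y)) < a} \<in> sets borel"
    and "emeasure lborel {u. norm (L (u - y)) < a} = ennreal (measure lborel {u. norm (L (u - y)) < a})"
proof -
  obtain \<beta> where b: "\<beta> > 0" "\<And>v. \<beta> * norm v \<le> norm (L v)" using linear_inj_bounded_below_pos[OF lin inj] by blast
  define V where "V = {v. norm (L v) < a}"
  have Lc: "continuous_on UNIV L" using lin by (simp add: linear_continuous_on linear_conv_bounded_linear)
  have Vo: "open V" unfolding V_def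
    by (intro open_Collect_less continuous_intros continuous_on_compose2[OF Lc]) auto
  have Vb: "bounded V"
  proof -
    have "norm v \<le> a / \<beta>" if "v \<in> V" for v
      using b(2)[of v] that b(1) by (auto simp: V_def field_simps)
    then show ?thesis by (auto simp: bounded_iff)
  qed
  have Vl: "V \<in> lmeasurable" using Vo Vb by (intro bounded_set_imp_lmeasurable) (auto intro: borel_open)
  have surj: "surj L" using linear_injective_imp_surjective[OF lin inj] by auto
  have img: "L ` V = ball 0 a"
  proof
    show "L ` V \<subseteq> ball 0 a" by (auto simp: V_def)
    show "ball 0 a \<subseteq> L ` V"
    proof
      fix w :: "real^'d" assume "w \<in> ball 0 a"
      moreover obtain v where "w = L v" using surj by (metis surjD)
      ultimately show "w \<in> L ` V" by (auto simp: V_def)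
    qed
  qed
  have dnz: "det (matrix L) \<noteq> 0" using det_nz_iff_inj[OF lin] inj by simp
  have "measure lebesgue (ball (0::real^'d) a) = \<bar>det (matrix L)\<bar> * measure lebesgue V"
    using measure_linear_image_fin[OF lin Vl] img by simp
  moreover have eqI: "{u. norm (L (u - y)) < a} = (+) y ` V"
  proof
    show "{u. norm (L (u - y)) < a} \<subseteq> (+) y ` V"
    proof
      fix u assume "u \<in> {u. norm (L (u - y)) < a}"
      then have "u - y \<in> V" by (simp add: V_def)
      then show "u \<in> (+) y ` V" by (rule rev_image_eqI) simp
    qed
  qed (auto simp: V_def)
  moreover have "measure lebesgue ((+) y ` V) = measure lebesgue V" by (rule measure_translation)
  ultimately have M: "measure lebesgue {u. norm (L (u - y)) < a} = measure lebesgue (ball (0::real^'d) a) / \<bar>det (matrix L)\<bar>"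
    using dnz by simp
  have Io: "open {u. norm (L (u - y)) < a}"
    by (intro open_Collect_less continuous_intros continuous_on_compose2[OF Lc]) auto
  show Ib: "{u. norm (L (u - y)) < a} \<in> sets borel" using Io by (rule borel_open)
  show "measure lborel {u. norm (L (u - y)) < a} = measure lborel (ball (0::real^'d) a) / \<bar>det (matrix L)\<bar>"
    using M Ib by (simp add: measure_completion)
  have "bounded {u. norm (L (u - y)) < a}" using Vb eqI by (simp add: bounded_translation)
  then obtain c R where "{u. norm (L (u - y)) < a} \<subseteq> ball c R" by (meson bounded_subset_ballD)
  then have "emeasure lborel {u. norm (L (u - y)) < a} \<le> emeasure lborel (ball c R)"
    by (intro emeasure_mono) auto
  also have "\<dots> < \<infinity>" by (rule emeasure_lborel_ball_finite)
  finally show "emeasure lborel {u. norm (L (u - y)) < a} = ennreal (measure lborel {u. norm (L (u - y)) < a})"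
    by (intro emeasure_eq_ennreal_measure) auto
qed


context PFsetup begin

lemma S_meas[measurable]: "S \<in> borel_measurable borel"
  using S_cont by (intro borel_measurable_continuous_onI) simp
lemma h_meas[measurable]: "h \<in> borel_measurable borel"
  using hcont by (intro borel_measurable_continuous_onI) simp

lemma S_shift: "int_vec k \<Longrightarrow> int_vec (S u - x) \<Longrightarrow> int_vec (S (u + k) - x)"
  using Slift[of k u] int_vec_add[of "S (u + k) - S u" "S u - x"] by simp

lemma J_pos: "0 < \<bar>det (matrix (S' y))\<bar>"
proof -
  have "inj (S' y)" using S'_lin linear_injective_0 S'inj by blast
  then show ?thesis using det_nz_iff_inj[OF S'_lin] by simp
qed

lemma radii:
  assumes "0 < \<epsilon>"
  obtains \<rho> where "\<rho> > 0"
    "\<And>u. dist u y < \<rho> \<Longrightarrow> (1 - \<epsilon>) * norm (S' y (u - y)) \<le> norm (S u - S y) \<and> norm (S u - S y) \<le> (1 + \<epsilon>) * norm (S' y (u - y))"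
    "\<And>u. dist u y < \<rho> \<Longrightarrow> \<bar>h u - h y\<bar> \<le> \<epsilon>"
    "\<And>u. dist u y < \<rho> \<Longrightarrow> norm (S u - S y) < 1/4"
    "\<And>u. dist u y < 2 * \<rho> \<Longrightarrow> int_vec (S u - S y) \<Longrightarrow> u = y"
proof -
  obtain d1 where d1: "d1 > 0" "\<And>u. dist u y < d1 \<Longrightarrow> (1 - \<epsilon>) * norm (S' y (u - y)) \<le> norm (S u - S y) \<and> norm (S u - S y) \<le> (1 + \<epsilon>) * norm (S' y (u - y))"
    using good2[OF assms] by blast
  obtain d2 where d2: "d2 > 0" "\<And>u. dist u y < d2 \<Longrightarrow> dist (h u) (h y) < \<epsilon>"
    using hcont assms unfolding continuous_on_iff by (metis UNIV_I)
  obtain d3 C where d3: "d3 > 0" "C > 0" "\<And>u. dist u y < d3 \<Longrightarrow> norm (S u - S y) \<le> C * dist u y"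
    using lip_near by blast
  obtain d4 where d4: "d4 > 0" "\<And>u. dist u y < d4 \<Longrightarrow> int_vec (S u - S y) \<Longrightarrow> u = y"
    using iso by blast
  define \<rho> where "\<rho> = min d1 (min d2 (min d3 (min (1 / (4 * C)) (d4 / 2))))"
  have rp: "\<rho> > 0" using d1 d2 d3 d4 by (simp add: \<rho>_def)
  show ?thesis
  proof (rule that[OF rp])
    fix u assume u: "dist u y < \<rho>"
    show "(1 - \<epsilon>) * norm (S' y (u - y)) \<le> norm (S u - S y) \<and> norm (S u - S y) \<le> (1 + \<epsilon>) * norm (S' y (u - y))"
      using d1(2) u by (simp add: \<rho>_def)
    show "\<bar>h u - h y\<bar> \<le> \<epsilon>" using d2(2)[of u] u by (simp add: \<rho>_def dist_real_def)
    have "norm (S u - S y) \<le> C * dist u y" using d3(3) u by (simp add: \<rho>_def)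
    also have "\<dots> < C * (1 / (4 * C))" using u d3(2) by (intro mult_strict_left_mono) (auto simp: \<rho>_def)
    also have "\<dots> = 1/4" using d3(2) by simp
    finally show "norm (S u - S y) < 1/4" .
  next
    fix u assume "dist u y < 2 * \<rho>" "int_vec (S u - S y)"
    then show "u = y" using d4(2) by (simp add: \<rho>_def)
  qed
qed

end

context PFsetup begin

lemma key:
  assumes inv: "\<And>A. A \<in> sets borel \<Longrightarrow> (\<And>z k. int_vec k \<Longrightarrow> (z \<in> A \<longleftrightarrow> z + k \<in> A)) \<Longrightarrow>
     (\<integral>\<^sup>+u. ennreal (indicator A (S u) * h u) * indicator fund u \<partial>lborel) = (\<integral>\<^sup>+u. ennreal (indicator A u * h u) * indicator fund u \<partial>lborel)"
    and e: "0 < \<epsilon>" "\<epsilon> < 1/2" and ex: "\<epsilon> \<le> h x" and ey: "\<And>y. y \<in> Pre x \<Longrightarrow> \<epsilon> \<le> h y"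
  shows "(\<Sum>y\<in>Pre x. (h y - \<epsilon>) / \<bar>det (matrix (S' y))\<bar>) / (1 + \<epsilon>) ^ CARD('d) \<le> h x + \<epsilon>"
    and "h x - \<epsilon> \<le> (\<Sum>y\<in>Pre x. (h y + \<epsilon>) / \<bar>det (matrix (S' y))\<bar>) / (1 - \<epsilon>) ^ CARD('d)"
proof -
  define P where "P = Pre x"
  have fP: "finite P" using finite_Pre by (simp add: P_def)
  define J where "J y = \<bar>det (matrix (S' y))\<bar>" for y
  have Jp: "0 < J y" for y using J_pos by (simp add: J_def)
  define Q where "Q = {q. int_vec (S q - x)}"
  have PQ: "P \<subseteq> Q" by (auto simp: P_def Pre_def Q_def)
  have "\<forall>y. \<exists>\<rho>. \<rho> > 0 \<and>
    (\<forall>u. dist u y < \<rho> \<longrightarrow> (1 - \<epsilon>) * norm (S' y (u - y)) \<le> norm (S u - S y) \<and> norm (S u - S y) \<le> (1 + \<epsilon>) * norm (S' y (u - y))) \<and>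
    (\<forall>u. dist u y < \<rho> \<longrightarrow> \<bar>h u - h y\<bar> \<le> \<epsilon>) \<and>
    (\<forall>u. dist u y < \<rho> \<longrightarrow> norm (S u - S y) < 1/4) \<and>
    (\<forall>u. dist u y < 2 * \<rho> \<longrightarrow> int_vec (S u - S y) \<longrightarrow> u = y)"
  proof
    fix y
    obtain \<rho> where "\<rho> > 0"
      "\<And>u. dist u y < \<rho> \<Longrightarrow> (1 - \<epsilon>) * norm (S' y (u - y)) \<le> norm (S u - S y) \<and> norm (S u - S y) \<le> (1 + \<epsilon>) * norm (S' y (u - y))"
      "\<And>u. dist u y < \<rho> \<Longrightarrow> \<bar>h u - h y\<bar> \<le> \<epsilon>"
      "\<And>u. dist u y < \<rho> \<Longrightarrow> norm (S u - S y) < 1/4"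
      "\<And>u. dist u y < 2 * \<rho> \<Longrightarrow> int_vec (S u - S y) \<Longrightarrow> u = y"
      using radii[OF e(1), of y] by blast
    then show "\<exists>\<rho>. \<rho> > 0 \<and>
    (\<forall>u. dist u y < \<rho> \<longrightarrow> (1 - \<epsilon>) * norm (S' y (u - y)) \<le> norm (S u - S y) \<and> norm (S u - S y) \<le> (1 + \<epsilon>) * norm (S' y (u - y))) \<and>
    (\<forall>u. dist u y < \<rho> \<longrightarrow> \<bar>h u - h y\<bar> \<le> \<epsilon>) \<and>
    (\<forall>u. dist u y < \<rho> \<longrightarrow> norm (S u - S y) < 1/4) \<and>
    (\<forall>u. dist u y < 2 * \<rho> \<longrightarrow> int_vec (S u - S y) \<longrightarrow> u = y)" by blast
  qed
  then obtain rad where radall: "\<forall>y. rad y > 0 \<and>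
    (\<forall>u. dist u y < rad y \<longrightarrow> (1 - \<epsilon>) * norm (S' y (u - y)) \<le> norm (S u - S y) \<and> norm (S u - S y) \<le> (1 + \<epsilon>) * norm (S' y (u - y))) \<and>
    (\<forall>u. dist u y < rad y \<longrightarrow> \<bar>h u - h y\<bar> \<le> \<epsilon>) \<and>
    (\<forall>u. dist u y < rad y \<longrightarrow> norm (S u - S y) < 1/4) \<and>
    (\<forall>u. dist u y < 2 * rad y \<longrightarrow> int_vec (S u - S y) \<longrightarrow> u = y)"
    by (rule choice[THEN exE]) blast
  have rad: "\<And>y. rad y > 0"
    "\<And>y u. dist u y < rad y \<Longrightarrow> (1 - \<epsilon>) * norm (S' y (u - y)) \<le> norm (S u - S y) \<and> norm (S u - S y) \<le> (1 + \<epsilon>) * norm (S' y (u - y))"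
    "\<And>y u. dist u y < rad y \<Longrightarrow> \<bar>h u - h y\<bar> \<le> \<epsilon>"
    "\<And>y u. dist u y < rad y \<Longrightarrow> norm (S u - S y) < 1/4"
    "\<And>y u. dist u y < 2 * rad y \<Longrightarrow> int_vec (S u - S y) \<Longrightarrow> u = y"
    using radall by blast+
  have "\<forall>y. \<exists>\<beta>. \<beta> > 0 \<and> (\<forall>v. \<beta> * norm v \<le> norm (S' y v))"
    using S'_below by metis
  then obtain bet where betall: "\<forall>y. bet y > 0 \<and> (\<forall>v. bet y * norm v \<le> norm (S' y v))"
    by (rule choice[THEN exE]) blast
  have bet: "\<And>y. bet y > 0" "\<And>y v. bet y * norm v \<le> norm (S' y v)" using betall by blast+
  define \<rho> where "\<rho> = Min (insert 1 (rad ` P))"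
  have \<rho>p: "\<rho> > 0" using fP rad(1) by (auto simp: \<rho>_def)
  have \<rho>le: "\<rho> \<le> rad y" if "y \<in> P" for y using fP that by (auto simp: \<rho>_def)
  have sep: "k = 0 \<and> y1 = y2" if "y1 \<in> P" "y2 \<in> P" "int_vec k" "dist (y1 + k) y2 < 2 * \<rho>" for y1 y2 k
  proof -
    have "int_vec (S (y1 + k) - x)" using S_shift[OF that(3)] that(1) by (auto simp: P_def Pre_def)
    moreover have "int_vec (S y2 - x)" using that(2) by (auto simp: P_def Pre_def)
    ultimately have "int_vec (S (y1 + k) - S y2)" using int_vec_diff by fastforce
    moreover have "dist (y1 + k) y2 < 2 * rad y2" using that(4) \<rho>le[OF that(2)] by linarith
    ultimately have "y1 + k = y2" using rad(5) by blast
    then have "k = 0" using fund_unique[of y1 k] that(1,2,3) by (auto simp: P_def Pre_def)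
    then show ?thesis using \<open>y1 + k = y2\<close> by simp
  qed
  define \<Lambda> where "\<Lambda> = {z::real^'d. int_vec (z - x)}"
  have \<Lambda>c: "closed \<Lambda>"
  proof -
    have "\<Lambda> = (\<lambda>z. z - x) -` {k. int_vec k}" by (auto simp: \<Lambda>_def)
    moreover have "closed ((\<lambda>z. z - x) -` {k::real^'d. int_vec k})"
      by (intro continuous_closed_vimage closed_int_vec) (auto intro: continuous_intros)
    ultimately show ?thesis by simp
  qed
  have \<Lambda>ne: "\<Lambda> \<noteq> {}" using int_vec_0 by (auto simp: \<Lambda>_def intro!: exI[of _ x])
  define K where "K = cbox 0 One \<inter> (\<Inter>q\<in>Q. {u. \<rho> \<le> dist u q})"
  have Kc: "compact K"
    unfolding K_def by (intro compact_Int_closed compact_cbox closed_INT ballI closed_Collect_le) (auto intro: continuous_intros)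
  have Kpos: "0 < infdist (S u) \<Lambda>" if "u \<in> K" for u
  proof (rule infdist_pos_not_in_closed[OF \<Lambda>c \<Lambda>ne])
    show "S u \<notin> \<Lambda>"
    proof
      assume "S u \<in> \<Lambda>"
      then have "u \<in> Q" by (auto simp: \<Lambda>_def Q_def)
      then show False using that \<rho>p by (auto simp: K_def)
    qed
  qed
  obtain r0 where r0: "r0 > 0" "\<And>u. u \<in> K \<Longrightarrow> r0 \<le> infdist (S u) \<Lambda>"
  proof (cases "K = {}")
    case True then show ?thesis using that[of 1] by auto
  next
    case False
    have "continuous_on K (\<lambda>u. infdist (S u) \<Lambda>)"
      using S_cont by (intro continuous_on_infdist) (auto intro: continuous_on_subset)
    then obtain um where "um \<in> K" "\<And>v. v \<in> K \<Longrightarrow> infdist (S um) \<Lambda> \<le> infdist (S v) \<Lambda>"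
      using continuous_attains_inf[OF Kc False] by blast
    then show ?thesis using that[of "infdist (S um) \<Lambda>"] Kpos by blast
  qed
  obtain rh where rh: "rh > 0" "\<And>u. dist u x < rh \<Longrightarrow> \<bar>h u - h x\<bar> \<le> \<epsilon>"
  proof -
    obtain d where "d > 0" "\<And>u. dist u x < d \<Longrightarrow> dist (h u) (h x) < \<epsilon>"
      using hcont e(1) unfolding continuous_on_iff by (metis UNIV_I)
    then show ?thesis using that[of d] by (force simp: dist_real_def)
  qed
  define r where "r = Min (insert (1/8) (insert r0 (insert rh ((\<lambda>y. bet y * \<rho>) ` P))))"
  have rp: "r > 0" using fP r0 rh bet \<rho>p by (auto simp: r_def)
  define M where "M = Min (insert rh ((\<lambda>y. bet y * \<rho>) ` P))"
  have rM: "r = min (1/8) (min r0 M)" using fP by (simp add: r_def M_def)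
  have m1: "M \<le> rh" unfolding M_def using fP by (intro Min_le) auto
  have m2: "M \<le> bet y * \<rho>" if "y \<in> P" for y unfolding M_def using fP that by (intro Min_le) auto
  have r8: "r \<le> 1/8" and rr0: "r \<le> r0" and rrh: "r \<le> rh" using m1 by (auto simp: rM)
  have rbet: "r \<le> bet y * \<rho>" if "y \<in> P" for y using m2[OF that] by (auto simp: rM)
  define A where "A = {z. \<exists>j. int_vec j \<and> dist z (x + j) < r}"
  have "A = (\<Union>j\<in>{j. int_vec j}. ball (x + j) r)" by (auto simp: A_def dist_commute)
  then have Ao: "open A" by auto
  have Ab[measurable]: "A \<in> sets borel" using Ao by (rule borel_open)
  have Aper: "z \<in> A \<longleftrightarrow> z + k \<in> A" if k: "int_vec k" for z k
  proof
    assume "z \<in> A"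
    then obtain j where j: "int_vec j" "dist z (x + j) < r" by (auto simp: A_def)
    have "dist (z + k) (x + (j + k)) = dist z (x + j)" by (simp add: dist_norm algebra_simps)
    then show "z + k \<in> A" using j k by (auto simp: A_def intro!: exI[of _ "j + k"])
  next
    assume "z + k \<in> A"
    then obtain j where j: "int_vec j" "dist (z + k) (x + j) < r" by (auto simp: A_def)
    have "dist z (x + (j - k)) = dist (z + k) (x + j)" by (simp add: dist_norm algebra_simps)
    then show "z \<in> A" using j k by (auto simp: A_def intro!: exI[of _ "j - k"])
  qed
  have eqLR: "(\<integral>\<^sup>+u. ennreal (indicator A (S u) * h u) * indicator fund u \<partial>lborel) = (\<integral>\<^sup>+u. ennreal (indicator A u * h u) * indicator fund u \<partial>lborel)"
    using inv[OF Ab Aper] .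
  define \<omega> where "\<omega> = measure lborel (ball (0::real^'d) 1)"
  have \<omega>p: "\<omega> > 0" unfolding \<omega>_def using content_ball_pos[of 1 "0::real^'d"] by simp
  have mball: "measure lborel (ball (c::real^'d) a) = a ^ CARD('d) * \<omega>" if "0 \<le> a" for c a
    using content_ball_conv_unit_ball[OF that, of c] by (simp add: \<omega>_def)
  have eball: "emeasure lborel (ball (c::real^'d) a) = ennreal (a ^ CARD('d) * \<omega>)" if "0 \<le> a" for c a
    using emeasure_lborel_ball_finite[of c a] mball[OF that, of c]
    by (subst emeasure_eq_ennreal_measure) auto
  have R1: "(\<integral>\<^sup>+u. ennreal (indicator A u * h u) * indicator fund u \<partial>lborel)
      = (\<integral>\<^sup>+u. ennreal (indicator A u * h u) * indicator (ball x r) u \<partial>lborel)"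
  proof (rule fold_lemma)
    show "(\<lambda>u. ennreal (indicator A u * h u)) \<in> borel_measurable borel" by measurable
    show "ennreal (indicator A (u + k) * h (u + k)) = ennreal (indicator A u * h u)" if "int_vec k" for u k
      using Aper[OF that, of u] hper[OF that, of u] by (simp add: indicator_def)
    show "ball x r \<in> sets borel" by auto
    show "bounded (ball x r)" by simp
    show "k = 0" if "u \<in> ball x r" "u + k \<in> ball x r" "int_vec k" for u k
    proof -
      have "norm k = dist (u + k) u" by (simp add: dist_norm)
      also have "\<dots> \<le> dist (u + k) x + dist u x" by (metis dist_commute dist_triangle)
      also have "\<dots> < 1" using that r8 by (auto simp: dist_commute)
      finally show ?thesis using int_vec_small that(3) by blast
    qed
    show "\<exists>k. int_vec k \<and> u + k \<in> ball x r" if "ennreal (indicator A u * h u) \<noteq> 0" for u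
    proof -
      have "u \<in> A" using that by (cases "u \<in> A") auto
      then obtain j where "int_vec j" "dist u (x + j) < r" by (auto simp: A_def)
      moreover have "dist (u + - j) x = dist u (x + j)" by (simp add: dist_norm algebra_simps)
      ultimately show ?thesis by (intro exI[of _ "- j"]) (auto simp: dist_commute)
    qed
  qed
  have R2: "(\<integral>\<^sup>+u. ennreal (indicator A u * h u) * indicator (ball x r) u \<partial>lborel)
      = (\<integral>\<^sup>+u. ennreal (h u) * indicator (ball x r) u \<partial>lborel)"
  proof (rule nn_integral_cong)
    fix u
    have "u \<in> ball x r \<Longrightarrow> u \<in> A" by (auto simp: A_def dist_commute intro!: exI[of _ 0])
    then show "ennreal (indicator A u * h u) * indicator (ball x r) u = ennreal (h u) * indicator (ball x r) u"
      by (auto simp: indicator_def)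
  qed
  have R3: "(\<integral>\<^sup>+u. ennreal (h u) * indicator (ball x r) u \<partial>lborel) \<le> ennreal ((h x + \<epsilon>) * (r ^ CARD('d) * \<omega>))"
  proof -
    have "(\<integral>\<^sup>+u. ennreal (h u) * indicator (ball x r) u \<partial>lborel) \<le> (\<integral>\<^sup>+u. ennreal (h x + \<epsilon>) * indicator (ball x r) u \<partial>lborel)"
    proof (rule nn_integral_mono)
      fix u
      have "u \<in> ball x r \<Longrightarrow> h u \<le> h x + \<epsilon>" using rh(2)[of u] rrh by (auto simp: dist_commute)
      then show "ennreal (h u) * indicator (ball x r) u \<le> ennreal (h x + \<epsilon>) * indicator (ball x r) u"
        by (auto simp: indicator_def intro: ennreal_leI)
    qed
    also have "\<dots> = ennreal (h x + \<epsilon>) * emeasure lborel (ball x r)" by (rule nn_integral_cmult_indicator) auto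
    also have "\<dots> = ennreal ((h x + \<epsilon>) * (r ^ CARD('d) * \<omega>))"
      using eball[of r x] rp e hpos[of x] \<omega>p by (simp add: ennreal_mult)
    finally show ?thesis .
  qed
  have R4: "ennreal ((h x - \<epsilon>) * (r ^ CARD('d) * \<omega>)) \<le> (\<integral>\<^sup>+u. ennreal (h u) * indicator (ball x r) u \<partial>lborel)"
  proof -
    have "ennreal ((h x - \<epsilon>) * (r ^ CARD('d) * \<omega>)) = ennreal (h x - \<epsilon>) * emeasure lborel (ball x r)"
      using eball[of r x] rp ex \<omega>p by (simp add: ennreal_mult)
    also have "\<dots> = (\<integral>\<^sup>+u. ennreal (h x - \<epsilon>) * indicator (ball x r) u \<partial>lborel)"
      by (rule nn_integral_cmult_indicator[symmetric]) auto
    also have "\<dots> \<le> (\<integral>\<^sup>+u. ennreal (h u) * indicator (ball x r) u \<partial>lborel)"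
    proof (rule nn_integral_mono)
      fix u
      have "u \<in> ball x r \<Longrightarrow> h x - \<epsilon> \<le> h u" using rh(2)[of u] rrh by (auto simp: dist_commute)
      then show "ennreal (h x - \<epsilon>) * indicator (ball x r) u \<le> ennreal (h u) * indicator (ball x r) u"
        by (auto simp: indicator_def intro: ennreal_leI)
    qed
    finally show ?thesis .
  qed
  define E where "E = (\<Union>y\<in>P. ball y \<rho>)"
  define G where "G u = ennreal (indicator A (S u) * h u)" for u
  have Gm[measurable]: "G \<in> borel_measurable borel" unfolding G_def by measurable
  have L1: "(\<integral>\<^sup>+u. ennreal (indicator A (S u) * h u) * indicator fund u \<partial>lborel)
      = (\<integral>\<^sup>+u. G u * indicator E u \<partial>lborel)"
    unfolding G_def[symmetric]
  proof (rule fold_lemma)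
    show "G \<in> borel_measurable borel" by (rule Gm)
    show "G (u + k) = G u" if k: "int_vec k" for u k
    proof -
      have m: "int_vec (S (u + k) - S u)" using Slift[OF k] .
      have "S (u + k) = S u + (S (u + k) - S u)" by simp
      then have "(S (u + k) \<in> A) = (S u \<in> A)" using Aper[OF m, of "S u"] by simp
      then show ?thesis using hper[OF k, of u] by (simp add: G_def indicator_def)
    qed
    show "E \<in> sets borel" unfolding E_def by (intro borel_open open_UN) auto
    show "bounded E" unfolding E_def using fP by auto
    show "k = 0" if uu: "u \<in> E" "u + k \<in> E" "int_vec k" for u k
    proof -
      obtain y1 where y1: "y1 \<in> P" "dist y1 u < \<rho>" using uu(1) by (auto simp: E_def)
      obtain y2 where y2: "y2 \<in> P" "dist y2 (u + k) < \<rho>" using uu(2) by (auto simp: E_def)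
      have "dist (y1 + k) y2 \<le> dist (y1 + k) (u + k) + dist (u + k) y2" by (rule dist_triangle)
      also have "dist (y1 + k) (u + k) = dist y1 u" by (simp add: dist_norm)
      finally have "dist (y1 + k) y2 < 2 * \<rho>" using y1 y2 by (simp add: dist_commute)
      then show ?thesis using sep[OF y1(1) y2(1) uu(3)] by blast
    qed
    show "\<exists>k. int_vec k \<and> u + k \<in> E" if Gu: "G u \<noteq> 0" for u
    proof -
      have "S u \<in> A" using Gu by (cases "S u \<in> A") (auto simp: G_def)
      then obtain j where j: "int_vec j" "dist (S u) (x + j) < r" by (auto simp: A_def)
      define u' where "u' = u - flo u"
      have u'f: "u' \<in> fund" unfolding u'_def by (rule flo_fund)
      have m: "int_vec (S u' - S u)" using Slift[of "- flo u" u] int_vec_minus[OF int_vec_flo[of u]] by (simp add: u'_def)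
      have "dist (S u') (x + (j + (S u' - S u))) = dist (S u) (x + j)" by (simp add: dist_norm algebra_simps)
      moreover have "x + (j + (S u' - S u)) \<in> \<Lambda>" using j(1) m by (auto simp: \<Lambda>_def)
      ultimately have "infdist (S u') \<Lambda> < r" using j(2) infdist_le[of "x + (j + (S u' - S u))" \<Lambda> "S u'"] by linarith
      then have "u' \<notin> K" using r0(2)[of u'] rr0 by linarith
      moreover have "u' \<in> cbox 0 One" using u'f fund_sub_cbox by blast
      ultimately obtain q where q: "q \<in> Q" "dist u' q < \<rho>" by (auto simp: K_def not_le)
      define y where "y = q - flo q"
      have yf: "y \<in> fund" unfolding y_def by (rule flo_fund)
      have "int_vec (S y - x)" using S_shift[of "- flo q" q] q(1) int_vec_minus[OF int_vec_flo[of q]] by (simp add: Q_def y_def)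
      then have yP: "y \<in> P" using yf by (simp add: P_def Pre_def)
      have e1: "u + (- flo u - flo q) = u' - flo q" by (simp add: u'_def)
      have e2: "dist (u' - flo q) y = dist u' q" by (simp add: y_def dist_norm)
      have "dist y (u + (- flo u - flo q)) = dist u' q" unfolding e1 using e2 by (simp add: dist_commute)
      then have "dist y (u + (- flo u - flo q)) < \<rho>" using q(2) by simp
      then have "u + (- flo u - flo q) \<in> E" using yP unfolding E_def by auto
      then show ?thesis by (intro exI[of _ "- flo u - flo q"]) auto
    qed
  qed
  have disjB: "disjoint_family_on (\<lambda>y. ball y \<rho>) P"
    unfolding disjoint_family_on_def
  proof (intro ballI impI)
    fix y1 y2 assume a: "y1 \<in> P" "y2 \<in> P" "y1 \<noteq> y2"
    show "ball y1 \<rho> \<inter> ball y2 \<rho> = {}"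
    proof (rule ccontr)
      assume "ball y1 \<rho> \<inter> ball y2 \<rho> \<noteq> {}"
      then obtain u where "dist y1 u < \<rho>" "dist y2 u < \<rho>" by auto
      then have "dist (y1 + 0) y2 < 2 * \<rho>" using dist_triangle[of y1 y2 u] by (simp add: dist_commute)
      then show False using sep[OF a(1,2) int_vec_0] a(3) by blast
    qed
  qed
  have L2: "(\<integral>\<^sup>+u. G u * indicator E u \<partial>lborel) = (\<Sum>y\<in>P. \<integral>\<^sup>+u. G u * indicator (ball y \<rho>) u \<partial>lborel)"
  proof -
    have "(\<integral>\<^sup>+u. G u * indicator E u \<partial>lborel) = (\<integral>\<^sup>+u. (\<Sum>y\<in>P. G u * indicator (ball y \<rho>) u) \<partial>lborel)"
      unfolding E_def by (simp add: indicator_UN_disjoint[OF fP disjB] sum_distrib_left)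
    also have "\<dots> = (\<Sum>y\<in>P. \<integral>\<^sup>+u. G u * indicator (ball y \<rho>) u \<partial>lborel)"
    proof (rule nn_integral_sum)
      fix y :: "real^'d"
      have [measurable]: "ball y \<rho> \<in> sets borel" by auto
      show "(\<lambda>u. G u * indicator (ball y \<rho>) u) \<in> borel_measurable lborel" by measurable
    qed
    finally show ?thesis .
  qed
  define U where "U y = {u. dist u y < \<rho> \<and> dist (S u) (S y) < r}" for y
  have Ub[measurable]: "U y \<in> sets borel" for y
  proof -
    have "open (U y)" unfolding U_def using S_cont
      by (intro open_Collect_conj open_Collect_less continuous_intros) (auto intro: continuous_on_compose2[OF S_cont])
    then show ?thesis by (rule borel_open)
  qed
  have L3: "G u * indicator (ball y \<rho>) u = ennreal (h u) * indicator (U y) u" if yP: "y \<in> P" for y u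
  proof (cases "dist u y < \<rho>")
    case False then show ?thesis by (auto simp: U_def dist_commute)
  next
    case True
    have ru: "dist u y < rad y" using True \<rho>le[OF yP] by linarith
    have "S u \<in> A \<longleftrightarrow> dist (S u) (S y) < r"
    proof
      assume "S u \<in> A"
      then obtain j where j: "int_vec j" "dist (S u) (x + j) < r" by (auto simp: A_def)
      have "norm ((x + j) - S y) = norm (((x + j) - S u) + (S u - S y))" by (simp add: algebra_simps)
      also have "\<dots> \<le> norm ((x + j) - S u) + norm (S u - S y)" by (rule norm_triangle_ineq)
      also have "norm ((x + j) - S u) = dist (S u) (x + j)" by (simp add: dist_norm norm_minus_commute)
      finally have "norm ((x + j) - S y) \<le> dist (S u) (x + j) + norm (S u - S y)" .
      also have "\<dots> < 1" using j(2) rad(4)[OF ru] r8 by linarith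
      finally have "norm ((x + j) - S y) < 1" .
      moreover have "int_vec ((x + j) - S y)"
        using j(1) yP int_vec_diff[of j "S y - x"] by (auto simp: P_def Pre_def algebra_simps)
      ultimately have "(x + j) - S y = 0" using int_vec_small by blast
      then show "dist (S u) (S y) < r" using j(2) by (simp add: algebra_simps)
    next
      assume "dist (S u) (S y) < r"
      moreover have "int_vec (S y - x)" using yP by (auto simp: P_def Pre_def)
      ultimately show "S u \<in> A" unfolding A_def by (intro CollectI exI[of _ "S y - x"]) auto
    qed
    then show ?thesis using True by (auto simp: G_def U_def indicator_def dist_commute)
  qed
  define In where "In y a = {u. norm (S' y (u - y)) < a}" for y a
  have Sinj: "inj (S' y)" for y using S'_lin linear_injective_0 S'inj by blast
  have emIn: "emeasure lborel (In y a) = ennreal (a ^ CARD('d) * \<omega> / J y)" if "0 \<le> a" for y a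
  proof -
    have "emeasure lborel (In y a) = ennreal (measure lborel (In y a))"
      unfolding In_def by (rule measure_In(3)[OF S'_lin Sinj that])
    also have "measure lborel (In y a) = measure lborel (ball (0::real^'d) a) / J y"
      unfolding In_def J_def by (rule measure_In(1)[OF S'_lin Sinj that])
    finally show ?thesis using mball[OF that] by simp
  qed
  have Inb[measurable]: "In y a \<in> sets borel" if "0 \<le> a" for y a
    unfolding In_def by (rule measure_In(2)[OF S'_lin Sinj that])
  have inner: "In y (r / (1 + \<epsilon>)) \<subseteq> U y" if yP: "y \<in> P" for y
  proof
    fix u assume "u \<in> In y (r / (1 + \<epsilon>))"
    then have a: "norm (S' y (u - y)) < r / (1 + \<epsilon>)" by (simp add: In_def)
    have "r / (1 + \<epsilon>) \<le> r" using rp e by (simp add: divide_le_eq)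
    then have "bet y * norm (u - y) < bet y * \<rho>" using bet(2)[of y "u - y"] a rbet[OF yP] by linarith
    then have du: "dist u y < \<rho>" using bet(1)[of y] by (simp add: dist_norm)
    then have "dist u y < rad y" using \<rho>le[OF yP] by linarith
    then have "norm (S u - S y) \<le> (1 + \<epsilon>) * norm (S' y (u - y))" using rad(2) by blast
    also have "\<dots> < (1 + \<epsilon>) * (r / (1 + \<epsilon>))" using a e by (intro mult_strict_left_mono) auto
    also have "\<dots> = r" using e by simp
    finally show "u \<in> U y" using du by (simp add: U_def dist_norm)
  qed
  have outer: "U y \<subseteq> In y (r / (1 - \<epsilon>))" if yP: "y \<in> P" for y
  proof
    fix u assume "u \<in> U y"
    then have du: "dist u y < \<rho>" and dS: "norm (S u - S y) < r" by (auto simp: U_def dist_norm)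
    then have "dist u y < rad y" using \<rho>le[OF yP] by linarith
    then have "(1 - \<epsilon>) * norm (S' y (u - y)) < r" using rad(2) dS by (meson le_less_trans)
    then show "u \<in> In y (r / (1 - \<epsilon>))" using e by (simp add: In_def field_simps)
  qed
  have pieceL: "ennreal ((h y - \<epsilon>) * ((r / (1 + \<epsilon>)) ^ CARD('d) * \<omega> / J y)) \<le> (\<integral>\<^sup>+u. ennreal (h u) * indicator (U y) u \<partial>lborel)"
    if yP: "y \<in> P" for y
  proof -
    have a0: "0 \<le> r / (1 + \<epsilon>)" using rp e by simp
    have nn: "0 \<le> h y - \<epsilon>" "0 \<le> (r / (1 + \<epsilon>)) ^ CARD('d) * \<omega> / J y"
      using ey[of y] yP \<omega>p Jp[of y] a0 by (auto simp: P_def)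
    have "ennreal ((h y - \<epsilon>) * ((r / (1 + \<epsilon>)) ^ CARD('d) * \<omega> / J y))
        = ennreal (h y - \<epsilon>) * ennreal ((r / (1 + \<epsilon>)) ^ CARD('d) * \<omega> / J y)"
      by (rule ennreal_mult[OF nn])
    also have "\<dots> = ennreal (h y - \<epsilon>) * emeasure lborel (In y (r / (1 + \<epsilon>)))"
      using emIn[OF a0, of y] by simp
    also have "\<dots> = (\<integral>\<^sup>+u. ennreal (h y - \<epsilon>) * indicator (In y (r / (1 + \<epsilon>))) u \<partial>lborel)"
      using Inb[OF a0] by (intro nn_integral_cmult_indicator[symmetric]) auto
    also have "\<dots> \<le> (\<integral>\<^sup>+u. ennreal (h u) * indicator (U y) u \<partial>lborel)"
    proof (rule nn_integral_mono)
      fix u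
      show "ennreal (h y - \<epsilon>) * indicator (In y (r / (1 + \<epsilon>))) u \<le> ennreal (h u) * indicator (U y) u"
      proof (cases "u \<in> In y (r / (1 + \<epsilon>))")
        case True
        then have uU: "u \<in> U y" using inner[OF yP] by blast
        then have "dist u y < rad y" using \<rho>le[OF yP] by (auto simp: U_def)
        then have "h y - \<epsilon> \<le> h u" using rad(3) by fastforce
        then show ?thesis using True uU by (auto intro: ennreal_leI)
      qed simp
    qed
    finally show ?thesis .
  qed
  have pieceU: "(\<integral>\<^sup>+u. ennreal (h u) * indicator (U y) u \<partial>lborel) \<le> ennreal ((h y + \<epsilon>) * ((r / (1 - \<epsilon>)) ^ CARD('d) * \<omega> / J y))"
    if yP: "y \<in> P" for y
  proof -
    have a0: "0 \<le> r / (1 - \<epsilon>)" using rp e by simp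
    have "(\<integral>\<^sup>+u. ennreal (h u) * indicator (U y) u \<partial>lborel) \<le> (\<integral>\<^sup>+u. ennreal (h y + \<epsilon>) * indicator (In y (r / (1 - \<epsilon>))) u \<partial>lborel)"
    proof (rule nn_integral_mono)
      fix u
      show "ennreal (h u) * indicator (U y) u \<le> ennreal (h y + \<epsilon>) * indicator (In y (r / (1 - \<epsilon>))) u"
      proof (cases "u \<in> U y")
        case True
        then have uI: "u \<in> In y (r / (1 - \<epsilon>))" using outer[OF yP] by blast
        have "dist u y < rad y" using True \<rho>le[OF yP] by (auto simp: U_def)
        then have "h u \<le> h y + \<epsilon>" using rad(3) by fastforce
        then show ?thesis using True uI by (auto intro: ennreal_leI)
      qed simp
    qed
    also have "\<dots> = ennreal (h y + \<epsilon>) * emeasure lborel (In y (r / (1 - \<epsilon>)))"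
      using Inb[OF a0] by (intro nn_integral_cmult_indicator) auto
    also have "\<dots> = ennreal (h y + \<epsilon>) * ennreal ((r / (1 - \<epsilon>)) ^ CARD('d) * \<omega> / J y)"
      using emIn[OF a0, of y] by simp
    also have "\<dots> = ennreal ((h y + \<epsilon>) * ((r / (1 - \<epsilon>)) ^ CARD('d) * \<omega> / J y))"
      using \<omega>p Jp[of y] a0 e hpos[of y] by (intro ennreal_mult[symmetric]) auto
    finally show ?thesis .
  qed
  have LHS: "(\<integral>\<^sup>+u. ennreal (indicator A (S u) * h u) * indicator fund u \<partial>lborel)
     = (\<Sum>y\<in>P. \<integral>\<^sup>+u. ennreal (h u) * indicator (U y) u \<partial>lborel)"
    using L1 L2 L3 by simp
  have Vp: "0 < r ^ CARD('d) * \<omega>" using rp \<omega>p by simp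
  have alg: "(\<Sum>y\<in>P. c y * ((r / q) ^ CARD('d) * \<omega> / J y)) = (r ^ CARD('d) * \<omega>) * ((\<Sum>y\<in>P. c y / J y) / q ^ CARD('d))"
    if "q > 0" for c q
    using that by (simp add: sum_distrib_left sum_divide_distrib power_divide field_simps)
  show "(\<Sum>y\<in>Pre x. (h y - \<epsilon>) / \<bar>det (matrix (S' y))\<bar>) / (1 + \<epsilon>) ^ CARD('d) \<le> h x + \<epsilon>"
  proof -
    have "ennreal (\<Sum>y\<in>P. (h y - \<epsilon>) * ((r / (1 + \<epsilon>)) ^ CARD('d) * \<omega> / J y))
        = (\<Sum>y\<in>P. ennreal ((h y - \<epsilon>) * ((r / (1 + \<epsilon>)) ^ CARD('d) * \<omega> / J y)))"
    proof (intro sum_ennreal[symmetric])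
      fix y assume "y \<in> P"
      then have "0 \<le> h y - \<epsilon>" using ey by (auto simp: P_def)
      moreover have "0 \<le> (r / (1 + \<epsilon>)) ^ CARD('d) * \<omega> / J y" using \<omega>p Jp[of y] rp e by auto
      ultimately show "0 \<le> (h y - \<epsilon>) * ((r / (1 + \<epsilon>)) ^ CARD('d) * \<omega> / J y)" by (rule mult_nonneg_nonneg)
    qed
    also have "\<dots> \<le> (\<Sum>y\<in>P. \<integral>\<^sup>+u. ennreal (h u) * indicator (U y) u \<partial>lborel)"
      by (intro sum_mono pieceL)
    also have "\<dots> \<le> ennreal ((h x + \<epsilon>) * (r ^ CARD('d) * \<omega>))"
      using LHS eqLR R1 R2 R3 by simp
    finally have "(\<Sum>y\<in>P. (h y - \<epsilon>) * ((r / (1 + \<epsilon>)) ^ CARD('d) * \<omega> / J y)) \<le> (h x + \<epsilon>) * (r ^ CARD('d) * \<omega>)"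
      using hpos[of x] e Vp by (subst (asm) ennreal_le_iff) auto
    then have "(r ^ CARD('d) * \<omega>) * ((\<Sum>y\<in>P. (h y - \<epsilon>) / J y) / (1 + \<epsilon>) ^ CARD('d)) \<le> (r ^ CARD('d) * \<omega>) * (h x + \<epsilon>)"
      using alg[of "1 + \<epsilon>" "\<lambda>y. h y - \<epsilon>"] e by (simp add: mult.commute)
    then have "(\<Sum>y\<in>P. (h y - \<epsilon>) / J y) / (1 + \<epsilon>) ^ CARD('d) \<le> h x + \<epsilon>"
      using mult_le_cancel_left_pos[OF Vp] by blast
    then show ?thesis by (simp add: P_def J_def)
  qed
  show "h x - \<epsilon> \<le> (\<Sum>y\<in>Pre x. (h y + \<epsilon>) / \<bar>det (matrix (S' y))\<bar>) / (1 - \<epsilon>) ^ CARD('d)"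
  proof -
    have nnU: "0 \<le> (h y + \<epsilon>) * ((r / (1 - \<epsilon>)) ^ CARD('d) * \<omega> / J y)" for y
    proof -
      have "0 \<le> h y + \<epsilon>" using hpos[of y] e by simp
      moreover have "0 \<le> (r / (1 - \<epsilon>)) ^ CARD('d) * \<omega> / J y" using \<omega>p Jp[of y] rp e by auto
      ultimately show ?thesis by (rule mult_nonneg_nonneg)
    qed
    have "ennreal ((h x - \<epsilon>) * (r ^ CARD('d) * \<omega>)) \<le> (\<Sum>y\<in>P. \<integral>\<^sup>+u. ennreal (h u) * indicator (U y) u \<partial>lborel)"
      using LHS eqLR R1 R2 R4 by simp
    also have "\<dots> \<le> (\<Sum>y\<in>P. ennreal ((h y + \<epsilon>) * ((r / (1 - \<epsilon>)) ^ CARD('d) * \<omega> / J y)))"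
      by (intro sum_mono pieceU)
    also have "\<dots> = ennreal (\<Sum>y\<in>P. (h y + \<epsilon>) * ((r / (1 - \<epsilon>)) ^ CARD('d) * \<omega> / J y))"
      by (intro sum_ennreal) (rule nnU)
    finally have "(h x - \<epsilon>) * (r ^ CARD('d) * \<omega>) \<le> (\<Sum>y\<in>P. (h y + \<epsilon>) * ((r / (1 - \<epsilon>)) ^ CARD('d) * \<omega> / J y))"
      using nnU by (subst (asm) ennreal_le_iff) (auto intro!: sum_nonneg)
    then have "(r ^ CARD('d) * \<omega>) * (h x - \<epsilon>) \<le> (r ^ CARD('d) * \<omega>) * ((\<Sum>y\<in>P. (h y + \<epsilon>) / J y) / (1 - \<epsilon>) ^ CARD('d))"
      using alg[of "1 - \<epsilon>" "\<lambda>y. h y + \<epsilon>"] e by (simp add: mult.commute)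
    then have "h x - \<epsilon> \<le> (\<Sum>y\<in>P. (h y + \<epsilon>) / J y) / (1 - \<epsilon>) ^ CARD('d)"
      using mult_le_cancel_left_pos[OF Vp] by blast
    then show ?thesis by (simp add: P_def J_def)
  qed
qed

end

context PFsetup begin

lemma PF_main:
  assumes inv: "\<And>A. A \<in> sets borel \<Longrightarrow> (\<And>z k. int_vec k \<Longrightarrow> (z \<in> A \<longleftrightarrow> z + k \<in> A)) \<Longrightarrow>
     (\<integral>\<^sup>+u. ennreal (indicator A (S u) * h u) * indicator fund u \<partial>lborel) = (\<integral>\<^sup>+u. ennreal (indicator A u * h u) * indicator fund u \<partial>lborel)"
  shows "(\<Sum>y\<in>Pre x. h y / \<bar>det (matrix (S' y))\<bar>) = h x"
proof -
  define P where "P = Pre x"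
  have fP: "finite P" using finite_Pre by (simp add: P_def)
  define J where "J y = \<bar>det (matrix (S' y))\<bar>" for y
  have Jnz: "J y \<noteq> 0" for y using J_pos[of y] unfolding J_def by linarith
  define e0 where "e0 = Min (insert (1/2) (h ` insert x P))"
  have e0p: "e0 > 0" using fP hpos by (auto simp: e0_def)
  define M where "M = Min (insert (h x) (h ` P))"
  have M1: "M \<le> h x" unfolding M_def using fP by (intro Min_le) auto
  have M2: "M \<le> h y" if "y \<in> P" for y unfolding M_def using fP that by (intro Min_le) auto
  have e0M: "e0 = min (1/2) M" using fP by (simp add: e0_def M_def)
  have e0le: "e0 \<le> 1/2" "e0 \<le> h x" "\<And>y. y \<in> P \<Longrightarrow> e0 \<le> h y"
    using M1 M2 by (auto simp: e0M min.coboundedI2)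
  have ev: "eventually (\<lambda>\<epsilon>. (\<Sum>y\<in>P. (h y - \<epsilon>) / J y) / (1 + \<epsilon>) ^ CARD('d) \<le> h x + \<epsilon>
        \<and> h x - \<epsilon> \<le> (\<Sum>y\<in>P. (h y + \<epsilon>) / J y) / (1 - \<epsilon>) ^ CARD('d)) (at_right 0)"
  proof (rule eventually_at_rightI[of 0 e0])
    fix \<epsilon> :: real assume "\<epsilon> \<in> {0<..<e0}"
    then have e: "0 < \<epsilon>" "\<epsilon> < e0" by auto
    have a: "0 < \<epsilon>" "\<epsilon> < 1/2" "\<epsilon> \<le> h x" using e e0le by auto
    have a4: "\<epsilon> \<le> h y" if "y \<in> Pre x" for y using e e0le(3)[of y] that by (auto simp: P_def)
    show "(\<Sum>y\<in>P. (h y - \<epsilon>) / J y) / (1 + \<epsilon>) ^ CARD('d) \<le> h x + \<epsilon>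
        \<and> h x - \<epsilon> \<le> (\<Sum>y\<in>P. (h y + \<epsilon>) / J y) / (1 - \<epsilon>) ^ CARD('d)"
      unfolding P_def J_def using key[OF inv a(1,2,3) a4] by blast
  qed (rule e0p)
  have l1: "((\<lambda>\<epsilon>. (\<Sum>y\<in>P. (h y - \<epsilon>) / J y) / (1 + \<epsilon>) ^ CARD('d)) \<longlongrightarrow> (\<Sum>y\<in>P. (h y - 0) / J y) / (1 + 0) ^ CARD('d)) (at_right 0)"
    by (intro tendsto_intros tendsto_ident_at) (simp_all add: Jnz)
  have l2: "((\<lambda>\<epsilon>. (\<Sum>y\<in>P. (h y + \<epsilon>) / J y) / (1 - \<epsilon>) ^ CARD('d)) \<longlongrightarrow> (\<Sum>y\<in>P. (h y + 0) / J y) / (1 - 0) ^ CARD('d)) (at_right 0)"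
    by (intro tendsto_intros tendsto_ident_at) (simp_all add: Jnz)
  have l3: "((\<lambda>\<epsilon>. h x + \<epsilon>) \<longlongrightarrow> h x + 0) (at_right (0::real))" by (intro tendsto_intros tendsto_ident_at)
  have l4: "((\<lambda>\<epsilon>. h x - \<epsilon>) \<longlongrightarrow> h x - 0) (at_right (0::real))" by (intro tendsto_intros tendsto_ident_at)
  have "(\<Sum>y\<in>P. (h y - 0) / J y) / (1 + 0) ^ CARD('d) \<le> h x + 0"
    by (rule tendsto_le[OF trivial_limit_at_right_real l3 l1]) (rule eventually_mono[OF ev], blast)
  moreover have "h x - 0 \<le> (\<Sum>y\<in>P. (h y + 0) / J y) / (1 - 0) ^ CARD('d)"
    by (rule tendsto_le[OF trivial_limit_at_right_real l2 l4]) (rule eventually_mono[OF ev], blast)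
  ultimately show ?thesis by (simp add: P_def J_def)
qed

end

lemma smooth_diff: "smooth_on UNIV f \<Longrightarrow> f differentiable (at x)"
  unfolding smooth_on_def by (metis UNIV_I dirder.simps(1))

lemma smooth_deriv_cont: "smooth_on UNIV f \<Longrightarrow> continuous_on UNIV (\<lambda>x. frechet_derivative f (at x) v)"
proof -
  assume sm: "smooth_on UNIV f"
  have "dirder [v] f differentiable (at x)" for x using sm unfolding smooth_on_def by blast
  then have "continuous (at x) (\<lambda>x. frechet_derivative f (at x) v)" for x
    using differentiable_imp_continuous_within by fastforce
  then show ?thesis by (simp add: continuous_at_imp_continuous_on)
qed

lemma smooth_cont: "smooth_on UNIV f \<Longrightarrow> continuous_on UNIV f"
  using smooth_diff differentiable_imp_continuous_within continuous_at_imp_continuous_on by blast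

lemma adj_comp:
  fixes f :: "'a::euclidean_space \<Rightarrow> 'b::euclidean_space" and g :: "'b \<Rightarrow> 'c::euclidean_space"
  assumes "linear f" "linear g"
  shows "adjoint (g \<circ> f) = adjoint f \<circ> adjoint g"
  by (rule adjoint_unique) (simp add: adjoint_works assms)

lemma adj_id: "adjoint (id :: 'a::euclidean_space \<Rightarrow> 'a) = id"
  by (rule adjoint_unique) simp

lemma adj_norm_le:
  fixes f :: "real^'n \<Rightarrow> real^'m"
  assumes lin: "linear f"
  shows "norm (adjoint f w) \<le> onorm f * norm w"
proof (cases "adjoint f w = 0")
  case True then show ?thesis using onorm_pos_le[of f] lin by (simp add: linear_conv_bounded_linear)
next
  case False
  have bl: "bounded_linear f" using lin by (simp add: linear_conv_bounded_linear)
  have "norm (adjoint f w) ^ 2 = adjoint f w \<bullet> adjoint f w" by (simp add: power2_norm_eq_inner)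
  also have "\<dots> = f (adjoint f w) \<bullet> w" by (simp add: adjoint_works lin)
  also have "\<dots> \<le> norm (f (adjoint f w)) * norm w" by (rule norm_cauchy_schwarz)
  also have "\<dots> \<le> (onorm f * norm (adjoint f w)) * norm w"
    by (intro mult_right_mono onorm[OF bl]) simp
  finally have "norm (adjoint f w) * norm (adjoint f w) \<le> norm (adjoint f w) * (onorm f * norm w)"
    by (simp add: power2_eq_square algebra_simps)
  then show ?thesis using False by simp
qed

lemma adj_lower:
  fixes f :: "real^'n \<Rightarrow> real^'n"
  assumes lin: "linear f" and c: "c > 0" and lb: "\<And>v. c * norm v \<le> norm (f v)"
  shows "c * norm w \<le> norm (adjoint f w)"
proof (cases "w = 0")
  case True then show ?thesis by simp
next
  case False
  have "inj f" using lin lb c by (metis linear_injective_0 mult_le_0_iff norm_le_zero_iff norm_zero not_le)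
  then have "surj f" using linear_injective_imp_surjective[OF lin] by auto
  then obtain u where u: "w = f u" by (metis surjD)
  have cu: "c * norm u \<le> norm w" using lb u by simp
  have "norm w ^ 2 = w \<bullet> f u" by (simp add: u power2_norm_eq_inner)
  also have "\<dots> = adjoint f w \<bullet> u" by (simp add: adjoint_works lin inner_commute)
  also have "\<dots> \<le> norm (adjoint f w) * norm u" by (rule norm_cauchy_schwarz)
  finally have 1: "norm w ^ 2 \<le> norm (adjoint f w) * norm u" .
  have "c * norm w ^ 2 \<le> norm (adjoint f w) * (c * norm u)" using 1 c by (simp add: algebra_simps)
  also have "\<dots> \<le> norm (adjoint f w) * norm w" using cu by (intro mult_left_mono) auto
  finally have "norm w * (c * norm w) \<le> norm w * norm (adjoint f w)" by (simp add: power2_eq_square algebra_simps)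
  then show ?thesis using False by simp
qed


locale Tsetup =
  fixes T :: "real^'d \<Rightarrow> real^'d" and h :: "real^'d \<Rightarrow> real"
  assumes T_smooth: "smooth_on UNIV T" and T_lift: "torus_lift T"
    and gamma_gt: "gamma_exp T > 1"
    and h_smooth: "smooth_on UNIV h" and h_per: "periodic h" and h_pos: "\<And>x. h x > 0"
    and h_inv: "invariant_density T h"
begin

abbreviation "T' y \<equiv> frechet_derivative T (at y)"

lemma Tder: "(T has_derivative T' y) (at y)"
  using smooth_diff[OF T_smooth] frechet_derivative_works by blast

lemma T_cont: "continuous_on UNIV T" by (rule smooth_cont[OF T_smooth])
lemma T_meas[measurable]: "T \<in> borel_measurable borel"
  using T_cont by (intro borel_measurable_continuous_onI) simp

lemma Tn_diff: "(T ^^ n) differentiable (at y)"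
proof (induction n arbitrary: y)
  case 0 then show ?case by (simp add: differentiable_ident)
next
  case (Suc n)
  show ?case unfolding funpow_Suc_right
    by (rule differentiable_chain_at[OF smooth_diff[OF T_smooth] Suc.IH])
qed

lemma DT_works: "((T ^^ n) has_derivative DT T n y) (at y)"
  unfolding DT_def using Tn_diff frechet_derivative_works by blast

lemma DT_lin: "linear (DT T n y)"
  using DT_works[of n y] has_derivative_bounded_linear bounded_linear.linear by blast

lemma DT_0: "DT T 0 y = id"
proof -
  have "((T ^^ 0) has_derivative id) (at y)" by (simp add: has_derivative_id)
  then show ?thesis unfolding DT_def by (metis frechet_derivative_at)
qed

lemma DT_Suc: "DT T (Suc n) y = DT T n (T y) \<circ> T' y"
proof -
  have "((T ^^ n) \<circ> T has_derivative DT T n (T y) \<circ> T' y) (at y)"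
    by (rule diff_chain_at[OF Tder DT_works])
  then have "((T ^^ Suc n) has_derivative DT T n (T y) \<circ> T' y) (at y)" unfolding funpow_Suc_right .
  then show ?thesis unfolding DT_def by (metis frechet_derivative_at)
qed

lemma T'_lin: "linear (T' y)"
  using Tder[of y] has_derivative_bounded_linear bounded_linear.linear by blast

lemma gam: "gamma_exp T * norm v \<le> norm (T' y v)"
proof (cases "v = 0")
  case True then show ?thesis using T'_lin linear_0 by force
next
  case False
  define u where "u = v /\<^sub>R norm v"
  have nu: "norm u = 1" using False by (simp add: u_def)
  have "gamma_exp T \<le> norm (T' y u)"
    unfolding gamma_exp_def
  proof (rule cInf_lower)
    show "norm (T' y u) \<in> {norm (frechet_derivative T (at x) v) |x v. norm v = 1}" using nu by blast
    show "bdd_below {norm (frechet_derivative T (at x) v) |x v. norm v = 1}"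
      by (rule bdd_belowI[of _ 0]) auto
  qed
  moreover have "T' y v = norm v *\<^sub>R T' y u"
    using False by (simp add: u_def linear_cmul[OF T'_lin])
  ultimately show ?thesis using mult_right_mono[of "gamma_exp T" "norm (T' y u)" "norm v"] by (simp add: mult.commute)
qed

lemma gam_pos: "gamma_exp T > 0" using gamma_gt by simp

lemma DT_lower: "gamma_exp T ^ n * norm v \<le> norm (DT T n y v)"
proof (induction n arbitrary: y v)
  case 0 then show ?case by (simp add: DT_0)
next
  case (Suc n)
  have "gamma_exp T ^ Suc n * norm v = gamma_exp T ^ n * (gamma_exp T * norm v)" by simp
  also have "\<dots> \<le> gamma_exp T ^ n * norm (T' y v)" using gam gam_pos by (intro mult_left_mono) auto
  also have "\<dots> \<le> norm (DT T n (T y) (T' y v))" by (rule Suc.IH)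
  finally show ?case by (simp add: DT_Suc)
qed

lemma DT_inj: "DT T n y v = 0 \<Longrightarrow> v = 0"
proof -
  assume "DT T n y v = 0"
  then have "gamma_exp T ^ n * norm v \<le> 0" using DT_lower[of n v y] by simp
  moreover have "gamma_exp T ^ n > 0" using gam_pos by simp
  ultimately show "v = 0" by (simp add: mult_le_0_iff)
qed

lemma Tlift: "int_vec k \<Longrightarrow> int_vec (T (x + k) - T x)"
  using T_lift by (auto simp: torus_lift_def)

lemma Tn_lift: "int_vec k \<Longrightarrow> int_vec ((T ^^ n) (x + k) - (T ^^ n) x)"
proof (induction n arbitrary: x)
  case 0 then show ?case by simp
next
  case (Suc n)
  have m: "int_vec ((T ^^ n) (x + k) - (T ^^ n) x)" using Suc by blast
  have e: "T ((T ^^ n) x + ((T ^^ n) (x + k) - (T ^^ n) x)) = T ((T ^^ n) (x + k))" by simp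
  have "int_vec (T ((T ^^ n) x + ((T ^^ n) (x + k) - (T ^^ n) x)) - T ((T ^^ n) x))" by (rule Tlift[OF m])
  then show ?case unfolding e by simp
qed

lemma hper: "int_vec k \<Longrightarrow> h (x + k) = h x" using h_per by (auto simp: periodic_def)
lemma h_cont: "continuous_on UNIV h" by (rule smooth_cont[OF h_smooth])
lemma h_meas[measurable]: "h \<in> borel_measurable borel"
  using h_cont by (intro borel_measurable_continuous_onI) simp

lemma h_bound: obtains C where "\<And>x. x \<in> cbox 0 One \<Longrightarrow> h x \<le> C"
proof -
  have "cbox (0::real^'d) One \<noteq> {}" by (simp add: box_ne_empty(1) One_cart_nth cart_eq_inner_axis[symmetric])
  then obtain z where "z \<in> cbox 0 One" "\<And>y. y \<in> cbox 0 One \<Longrightarrow> h y \<le> h z"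
    using continuous_attains_sup[OF compact_cbox _ continuous_on_subset[OF h_cont]] by blast
  then show ?thesis using that by blast
qed

lemma inv1:
  assumes Ab[measurable]: "A \<in> sets borel" and Aper: "\<And>z k. int_vec k \<Longrightarrow> (z \<in> A \<longleftrightarrow> z + k \<in> A)"
  shows "(\<integral>\<^sup>+u. ennreal (indicator A (T u) * h u) * indicator fund u \<partial>lborel) = (\<integral>\<^sup>+u. ennreal (indicator A u * h u) * indicator fund u \<partial>lborel)"
proof -
  obtain C where C: "\<And>x. x \<in> cbox 0 One \<Longrightarrow> h x \<le> C" using h_bound by blast
  have "(0::real^'d) \<in> cbox 0 One" by (simp add: mem_box_cart One_cart_nth)
  then have C0: "0 \<le> C" using C[of 0] h_pos[of 0] by linarith
  have eq: "integral (cbox 0 One) (\<lambda>y. indicator A (T y) * h y) = integral (cbox 0 One) (\<lambda>y. indicator A y * h y)"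
    using h_inv Ab Aper unfolding invariant_density_def by blast
  have "ennreal (integral (cbox 0 One) (\<lambda>y. indicator A (T y) * h y)) = (\<integral>\<^sup>+u. ennreal (indicator A (T u) * h u) * indicator fund u \<partial>lborel)"
    by (rule cube_nn[of _ C]) (use h_pos C C0 in \<open>auto simp: indicator_def less_imp_le\<close>)
  moreover have "ennreal (integral (cbox 0 One) (\<lambda>y. indicator A y * h y)) = (\<integral>\<^sup>+u. ennreal (indicator A u * h u) * indicator fund u \<partial>lborel)"
    by (rule cube_nn[of _ C]) (use h_pos C C0 in \<open>auto simp: indicator_def less_imp_le\<close>)
  ultimately show ?thesis using eq by simp
qed

lemma invn:
  "A \<in> sets borel \<Longrightarrow> (\<And>z k. int_vec k \<Longrightarrow> (z \<in> A \<longleftrightarrow> z + k \<in> A)) \<Longrightarrow>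
   (\<integral>\<^sup>+u. ennreal (indicator A ((T ^^ n) u) * h u) * indicator fund u \<partial>lborel) = (\<integral>\<^sup>+u. ennreal (indicator A u * h u) * indicator fund u \<partial>lborel)"
proof (induction n arbitrary: A)
  case 0 then show ?case by simp
next
  case (Suc n)
  define B where "B = T -` A"
  have Bb: "B \<in> sets borel" unfolding B_def using measurable_sets[OF T_meas Suc.prems(1)] by simp
  have Bper: "z \<in> B \<longleftrightarrow> z + k \<in> B" if k: "int_vec k" for z k
  proof -
    have m: "int_vec (T (z + k) - T z)" by (rule Tlift[OF k])
    have "T (z + k) = T z + (T (z + k) - T z)" by simp
    then show ?thesis unfolding B_def using Suc.prems(2)[OF m, of "T z"] by auto
  qed
  have "(\<integral>\<^sup>+u. ennreal (indicator A ((T ^^ Suc n) u) * h u) * indicator fund u \<partial>lborel)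
      = (\<integral>\<^sup>+u. ennreal (indicator B ((T ^^ n) u) * h u) * indicator fund u \<partial>lborel)"
    by (simp add: B_def indicator_def)
  also have "\<dots> = (\<integral>\<^sup>+u. ennreal (indicator B u * h u) * indicator fund u \<partial>lborel)"
    by (rule Suc.IH[OF Bb Bper])
  also have "\<dots> = (\<integral>\<^sup>+u. ennreal (indicator A (T u) * h u) * indicator fund u \<partial>lborel)"
    by (simp add: B_def indicator_def)
  also have "\<dots> = (\<integral>\<^sup>+u. ennreal (indicator A u * h u) * indicator fund u \<partial>lborel)"
    by (rule inv1[OF Suc.prems])
  finally show ?case .
qed

lemma PFn: "finite (preim T n x) \<and> (\<Sum>y\<in>preim T n x. h y / \<bar>det (matrix (DT T n y))\<bar>) = h x"
proof -
  interpret PF: PFsetup "T ^^ n" "DT T n" h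
    by unfold_locales (auto intro: DT_works DT_inj Tn_lift hper h_cont h_pos)
  have eq: "PF.Pre = preim T n" by (auto simp: PF.Pre_def preim_def fun_eq_iff)
  show ?thesis using PF.finite_Pre[of x] PF.PF_main[OF invn, of x] unfolding eq by blast
qed

lemma sumA: "(\<Sum>y\<in>preim T n x. A_n T h n y) = 1" and finite_preim: "finite (preim T n x)"
proof -
  have hx: "h ((T ^^ n) y) = h x" if "y \<in> preim T n x" for y
  proof -
    have "int_vec ((T ^^ n) y - x)" using that by (auto simp: preim_def)
    then have "h (x + ((T ^^ n) y - x)) = h x" by (rule hper)
    then show ?thesis by simp
  qed
  have "(\<Sum>y\<in>preim T n x. A_n T h n y) = (\<Sum>y\<in>preim T n x. h y / \<bar>det (matrix (DT T n y))\<bar>) / h x"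
    by (simp add: A_n_def sum_divide_distrib hx)
  also have "\<dots> = 1" using PFn[of n x] h_pos[of x] by simp
  finally show "(\<Sum>y\<in>preim T n x. A_n T h n y) = 1" .
  show "finite (preim T n x)" using PFn by blast
qed

end


lemma tau'_per:
  fixes \<tau> :: "real^'d \<Rightarrow> real^'l"
  assumes sm: "smooth_on UNIV \<tau>" and per: "periodic \<tau>" and k: "int_vec k"
  shows "frechet_derivative \<tau> (at (x + k)) = frechet_derivative \<tau> (at x)"
proof -
  have d: "(\<tau> has_derivative frechet_derivative \<tau> (at x)) (at x)"
    using smooth_diff[OF sm] frechet_derivative_works by blast
  have t: "((\<lambda>z. z + - k) has_derivative id) (at (x + k))"
    using has_derivative_add_const[OF has_derivative_ident, of "- k" "at (x + k)"] by (simp add: id_def)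
  have "((\<lambda>z. \<tau> (z + - k)) has_derivative (\<lambda>v. frechet_derivative \<tau> (at x) (id v))) (at (x + k))"
    using has_derivative_compose[OF t] d by simp
  moreover have "(\<lambda>z. \<tau> (z + - k)) = \<tau>"
  proof (rule ext)
    fix z show "\<tau> (z + - k) = \<tau> z" using per int_vec_minus[OF k] unfolding periodic_def by blast
  qed
  ultimately have "(\<tau> has_derivative frechet_derivative \<tau> (at x)) (at (x + k))" by (simp add: id_def)
  then show ?thesis by (metis frechet_derivative_at)
qed

lemma tau_bound:
  fixes \<tau> :: "real^'d \<Rightarrow> real^'l"
  assumes sm: "smooth_on UNIV \<tau>" and per: "periodic \<tau>"
  shows "onorm (frechet_derivative \<tau> (at x)) \<le> Dtau_norm \<tau>"
proof -
  let ?D = "\<lambda>x. frechet_derivative \<tau> (at x)"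
  have lin: "linear (?D x)" for x
    using smooth_diff[OF sm] frechet_derivative_works has_derivative_bounded_linear bounded_linear.linear by blast
  have ne: "cbox (0::real^'d) One \<noteq> {}" by (simp add: box_ne_empty(1) One_cart_nth cart_eq_inner_axis[symmetric])
  have "\<forall>i. \<exists>B. \<forall>z\<in>cbox 0 One. norm (?D z (axis i 1)) \<le> B"
  proof
    fix i
    have "continuous_on (cbox 0 One) (\<lambda>z. norm (?D z (axis i 1)))"
      using smooth_deriv_cont[OF sm, of "axis i 1"] by (intro continuous_on_norm) (auto intro: continuous_on_subset)
    then obtain z0 where "z0 \<in> cbox 0 One" "\<forall>z\<in>cbox 0 One. norm (?D z (axis i 1)) \<le> norm (?D z0 (axis i 1))"
      using continuous_attains_sup[OF compact_cbox ne] by blast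
    then show "\<exists>B. \<forall>z\<in>cbox 0 One. norm (?D z (axis i 1)) \<le> B" by blast
  qed
  then obtain B where B: "\<And>i z. z \<in> cbox 0 One \<Longrightarrow> norm (?D z (axis i 1)) \<le> B i" by metis
  have bcube: "onorm (?D z) \<le> (\<Sum>i\<in>UNIV. B i)" if z: "z \<in> cbox 0 One" for z
  proof (rule onorm_le)
    fix v :: "real^'d"
    have "?D z v = ?D z (\<Sum>i\<in>UNIV. v $ i *s axis i 1)" by (simp add: basis_expansion)
    also have "\<dots> = (\<Sum>i\<in>UNIV. v $ i *\<^sub>R ?D z (axis i 1))"
      by (simp add: linear_sum[OF lin] linear_cmul[OF lin] scalar_mult_eq_scaleR)
    finally have eq: "?D z v = (\<Sum>i\<in>UNIV. v $ i *\<^sub>R ?D z (axis i 1))" .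
    have "norm (?D z v) \<le> (\<Sum>i\<in>UNIV. norm (v $ i *\<^sub>R ?D z (axis i 1)))"
      unfolding eq by (rule norm_sum)
    also have "\<dots> \<le> (\<Sum>i\<in>UNIV. norm v * B i)"
    proof (rule sum_mono)
      fix i
      have "norm (v $ i *\<^sub>R ?D z (axis i 1)) = \<bar>v $ i\<bar> * norm (?D z (axis i 1))" by simp
      also have "\<dots> \<le> norm v * B i"
        using B[OF z, of i] component_le_norm_cart[of v i] by (intro mult_mono) auto
      finally show "norm (v $ i *\<^sub>R ?D z (axis i 1)) \<le> norm v * B i" .
    qed
    finally show "norm (?D z v) \<le> (\<Sum>i\<in>UNIV. B i) * norm v" by (simp add: sum_distrib_left mult.commute)
  qed
  have ball_: "onorm (?D y) \<le> (\<Sum>i\<in>UNIV. B i)" for y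
  proof -
    have "?D y = ?D ((y - flo y) + flo y)" by simp
    also have "\<dots> = ?D (y - flo y)" by (rule tau'_per[OF sm per int_vec_flo])
    finally show ?thesis using bcube[of "y - flo y"] flo_fund[of y] fund_sub_cbox by auto
  qed
  show ?thesis unfolding Dtau_norm_def
    by (rule cSup_upper) (use ball_ in \<open>auto intro!: bdd_aboveI\<close>)
qed

context Tsetup begin

lemma F_0: "F_n T \<tau> 0 nn y \<xi> = \<xi>"
  by (simp add: F_n_def W_n_def DT_0 adj_id)

lemma F_Suc:
  assumes sm: "smooth_on UNIV \<tau>"
  shows "F_n T \<tau> (Suc n) nn y \<xi> = adjoint (T' y) (F_n T \<tau> n nn (T y) \<xi>) + adjoint (frechet_derivative \<tau> (at y)) nn"
proof -
  have adjS: "adjoint (DT T (Suc k) z) = adjoint (T' z) \<circ> adjoint (DT T k (T z))" for k z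
    by (simp add: DT_Suc adj_comp T'_lin DT_lin)
  have la: "linear (adjoint (T' y))" by (rule adjoint_linear[OF T'_lin])
  have "W_n T \<tau> (Suc n) y nn = adjoint (DT T 0 y) (adjoint (frechet_derivative \<tau> (at y)) nn)
      + (\<Sum>k<n. adjoint (DT T (Suc k) y) (adjoint (frechet_derivative \<tau> (at ((T ^^ Suc k) y))) nn))"
    unfolding W_n_def by (subst sum.lessThan_Suc_shift) simp
  also have "\<dots> = adjoint (frechet_derivative \<tau> (at y)) nn + adjoint (T' y) (W_n T \<tau> n (T y) nn)"
    by (simp add: DT_0 adj_id adjS W_n_def linear_sum[OF la] funpow_swap1)
  finally have W: "W_n T \<tau> (Suc n) y nn = adjoint (frechet_derivative \<tau> (at y)) nn + adjoint (T' y) (W_n T \<tau> n (T y) nn)" .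
  show ?thesis
    unfolding F_n_def W adjS by (simp add: linear_add[OF la] algebra_simps)
qed

lemma F_growth:
  fixes \<tau> :: "real^'d \<Rightarrow> real^'l" and nn :: "real^'l"
  assumes sm: "smooth_on UNIV \<tau>" and per: "periodic \<tau>" and nn1: "norm nn = 1"
    and Rg: "(gamma_exp T - 1) * R > 2 * Dtau_norm \<tau>" and xi: "norm \<xi> > R" and R0: "R > 0"
  shows "((gamma_exp T + 1) / 2) ^ n * norm \<xi> \<le> norm (F_n T \<tau> n nn y \<xi>)"
proof (induction n arbitrary: y)
  case 0 then show ?case by (simp add: F_0)
next
  case (Suc n)
  let ?g = "gamma_exp T" and ?c = "(gamma_exp T + 1) / 2" and ?D = "Dtau_norm \<tau>"
  let ?F = "F_n T \<tau> n nn (T y) \<xi>"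
  have c1: "1 \<le> ?c" using gamma_gt by simp
  have IH: "?c ^ n * norm \<xi> \<le> norm ?F" by (rule Suc.IH)
  have "norm \<xi> \<le> ?c ^ n * norm \<xi>" using c1 by (simp add: one_le_power mult_le_cancel_right1)
  then have FR: "R < norm ?F" using IH xi by linarith
  have lin\<tau>: "linear (frechet_derivative \<tau> (at y))"
    using smooth_diff[OF sm] frechet_derivative_works has_derivative_bounded_linear bounded_linear.linear by blast
  have a1: "?g * norm ?F \<le> norm (adjoint (T' y) ?F)"
    by (rule adj_lower[OF T'_lin gam_pos gam])
  have a2: "norm (adjoint (frechet_derivative \<tau> (at y)) nn) \<le> ?D"
    using adj_norm_le[OF lin\<tau>, of nn] tau_bound[OF sm per, of y] nn1 by simp
  have "norm (F_n T \<tau> (Suc n) nn y \<xi>) \<ge> norm (adjoint (T' y) ?F) - norm (adjoint (frechet_derivative \<tau> (at y)) nn)"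
    unfolding F_Suc[OF sm] by (rule norm_diff_ineq)
  moreover have "?c * norm ?F \<le> ?g * norm ?F - ?D"
  proof -
    have "(?g - 1) * R \<le> (?g - 1) * norm ?F" using FR gamma_gt by (intro mult_left_mono) auto
    then have h2: "2 * ?D < (?g - 1) * norm ?F" using Rg by linarith
    have "?g * norm ?F - ?c * norm ?F = (?g - 1) * norm ?F / 2" by (simp add: field_simps)
    then show ?thesis using h2 by linarith
  qed
  ultimately have "?c * norm ?F \<le> norm (F_n T \<tau> (Suc n) nn y \<xi>)" using a1 a2 by linarith
  moreover have "?c ^ Suc n * norm \<xi> \<le> ?c * norm ?F" using IH c1 by (simp add: mult_left_mono mult.assoc)
  ultimately show ?case by linarith
qed

end


theorem mainTheorem8:
  fixes T :: "real^'d \<Rightarrow> real^'d" and h :: "real^'d \<Rightarrow> real"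
    and \<tau> :: "real^'d \<Rightarrow> real^'l" and g0 :: "real \<Rightarrow> real"
    and s R :: real and nn :: "real^'l"
  assumes T_smooth: "smooth_on UNIV T" and T_lift: "torus_lift T"
    and gamma_gt: "gamma_exp T > 1"
    and h_smooth: "smooth_on UNIV h" and h_per: "periodic h" and h_pos: "\<And>x. h x > 0"
    and h_prob: "integral (cbox 0 One) h = 1"
    and h_inv: "invariant_density T h"
    and tau_smooth: "smooth_on UNIV \<tau>" and tau_per: "periodic \<tau>"
    and s_neg: "s < 0"
    and R_gt: "R > max 1 (max 1 (2 * Dtau_norm \<tau>) / (gamma_exp T - 1))"
    and g0_smooth: "smooth_on {0<..} g0"
    and g0_low: "\<And>t. 0 \<le> t \<Longrightarrow> t \<le> R \<Longrightarrow> g0 t = 1"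
    and g0_high: "\<And>t. (gamma_exp T + 1) / 2 * R \<le> t \<Longrightarrow> g0 t = t"
    and g0_mono: "strict_mono_on {R..<(gamma_exp T + 1) / 2 * R} g0"
    and g0_mid: "\<And>t. R \<le> t \<Longrightarrow> t < (gamma_exp T + 1) / 2 * R \<Longrightarrow> 1 \<le> g0 t \<and> g0 t \<le> t"
    and nn_unit: "norm nn = 1"
  shows "(\<forall>n x \<xi>. n \<ge> 1 \<longrightarrow> p_tilde T h \<tau> g0 s nn n x \<xi> \<le> 1)
       \<and> (\<forall>n x \<xi>. n \<ge> 1 \<longrightarrow>
            (p_tilde T h \<tau> g0 s nn n x \<xi> < 1 \<longleftrightarrow>
             (\<exists>y \<in> preim T n x. norm (F_n T \<tau> n nn y \<xi>) > R)))
       \<and> (\<forall>n x \<xi>. n \<ge> 1 \<longrightarrow> norm \<xi> > R \<longrightarrow>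
            p_tilde T h \<tau> g0 s nn n x \<xi> \<le> ((gamma_exp T + 1) / 2) powr (2 * s)
            \<and> ((gamma_exp T + 1) / 2) powr (2 * s) < 1)"
proof -
  interpret TS: Tsetup T h
    using T_smooth T_lift gamma_gt h_smooth h_per h_pos h_inv by unfold_locales auto
  define \<gamma> where "\<gamma> = gamma_exp T"
  define c where "c = (\<gamma> + 1) / 2"
  define D where "D = Dtau_norm \<tau>"
  have g1: "\<gamma> > 1" using gamma_gt by (simp add: \<gamma>_def)
  have c1: "c > 1" using g1 by (simp add: c_def)
  have R1: "R > 1" using R_gt by simp
  have Rg: "(gamma_exp T - 1) * R > 2 * Dtau_norm \<tau>"
  proof -
    have "max 1 (2 * D) / (\<gamma> - 1) < R" using R_gt by (simp add: \<gamma>_def D_def)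
    then have "max 1 (2 * D) < R * (\<gamma> - 1)" using g1 by (simp add: divide_less_eq)
    then show ?thesis by (simp add: \<gamma>_def D_def mult.commute)
  qed
  have cR: "R < c * R" using c1 R1 by simp
  have cRe: "(gamma_exp T + 1) / 2 * R = c * R" by (simp add: c_def \<gamma>_def)
  have g0_1: "g0 t = 1" if "0 \<le> t" "t \<le> R" for t using g0_low that by blast
  have g0_gt: "1 < g0 t" if "R < t" for t
  proof (cases "t < c * R")
    case True
    have "g0 R < g0 t"
      using g0_mono that True cR unfolding strict_mono_on_def cRe by auto
    moreover have "g0 R = 1" using g0_1[of R] R1 by simp
    ultimately show ?thesis by simp
  next
    case False
    then have "g0 t = t" using g0_high[of t] cRe by simp
    then show ?thesis using that R1 by simp
  qed
  have g0_ge: "1 \<le> g0 t" if "0 \<le> t" for t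
    using g0_1[OF that] g0_gt[of t] by (cases "t \<le> R") auto
  have g0_le: "g0 t \<le> t" if "R < t" for t
  proof (cases "t < c * R")
    case True then show ?thesis using g0_mid[of t] that cRe by simp
  next
    case False then show ?thesis using g0_high[of t] cRe by simp
  qed
  have s2: "2 * s < 0" using s_neg by simp
  have cpow: "c powr (2 * s) < 1" using powr_less_one[OF c1 s2] .
  have main: "p_tilde T h \<tau> g0 s nn n x \<xi> \<le> 1
     \<and> (p_tilde T h \<tau> g0 s nn n x \<xi> < 1 \<longleftrightarrow> (\<exists>y \<in> preim T n x. norm (F_n T \<tau> n nn y \<xi>) > R))
     \<and> (norm \<xi> > R \<longrightarrow> p_tilde T h \<tau> g0 s nn n x \<xi> \<le> c powr (2 * s))"
    if n1: "n \<ge> 1" for n x \<xi>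
  proof -
    define P where "P = preim T n x"
    define a where "a y = A_n T h n y" for y
    define F where "F y = F_n T \<tau> n nn y \<xi>" for y
    define t where "t y = (g0 (norm (F y)) / g0 (norm \<xi>)) powr (2 * s)" for y
    have fP: "finite P" using TS.finite_preim by (simp add: P_def)
    have sa: "(\<Sum>y\<in>P. a y) = 1" using TS.sumA by (simp add: P_def a_def)
    have apos: "a y > 0" for y
    proof -
      have "inj (DT T n y)" using TS.DT_lin TS.DT_inj linear_injective_0 by blast
      then have "det (matrix (DT T n y)) \<noteq> 0" using det_nz_iff_inj[OF TS.DT_lin] by simp
      then show ?thesis using h_pos[of y] h_pos[of "(T ^^ n) y"] by (simp add: a_def A_n_def)
    qed
    have p: "p_tilde T h \<tau> g0 s nn n x \<xi> = (\<Sum>y\<in>P. a y * t y)"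
      by (simp add: p_tilde_def P_def a_def t_def F_def)
    have Pne: "P \<noteq> {}" using sa by auto
    show ?thesis
    proof (cases "norm \<xi> \<le> R")
      case True
      have gx: "g0 (norm \<xi>) = 1" using g0_1[OF norm_ge_zero True] .
      have t_le: "t y \<le> 1" for y
      proof -
        have "g0 (norm (F y)) powr (2 * s) \<le> 1 powr (2 * s)"
          using g0_ge[of "norm (F y)"] s2 by (intro powr_mono2') auto
        then show ?thesis by (simp add: t_def gx)
      qed
      have t_lt: "t y < 1 \<longleftrightarrow> norm (F y) > R" for y
      proof
        assume "t y < 1"
        show "norm (F y) > R"
        proof (rule ccontr)
          assume "\<not> norm (F y) > R"
          then have "g0 (norm (F y)) = 1" using g0_1[of "norm (F y)"] by simp
          then show False using \<open>t y < 1\<close> by (simp add: t_def gx)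
        qed
      next
        assume "norm (F y) > R"
        then have "1 < g0 (norm (F y))" by (rule g0_gt)
        then show "t y < 1" using powr_less_one[OF _ s2] by (simp add: t_def gx)
      qed
      have le: "(\<Sum>y\<in>P. a y * t y) \<le> (\<Sum>y\<in>P. a y)"
        by (rule sum_mono) (use apos t_le in \<open>simp add: less_imp_le mult_left_le\<close>)
      have iff: "(\<Sum>y\<in>P. a y * t y) < 1 \<longleftrightarrow> (\<exists>y\<in>P. norm (F y) > R)"
      proof
        assume lt: "(\<Sum>y\<in>P. a y * t y) < 1"
        show "\<exists>y\<in>P. norm (F y) > R"
        proof (rule ccontr)
          assume "\<not> (\<exists>y\<in>P. norm (F y) > R)"
          then have "\<forall>y\<in>P. t y = 1" using t_lt t_le by (meson le_less)
          then have "(\<Sum>y\<in>P. a y * t y) = (\<Sum>y\<in>P. a y)" by simp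
          then show False using lt sa by simp
        qed
      next
        assume "\<exists>y\<in>P. norm (F y) > R"
        then obtain y0 where "y0 \<in> P" "t y0 < 1" using t_lt by blast
        then have "(\<Sum>y\<in>P. a y * t y) < (\<Sum>y\<in>P. a y)"
          using apos t_le by (intro sum_strict_mono_ex1[OF fP]) (auto simp: mult_left_le less_imp_le)
        then show "(\<Sum>y\<in>P. a y * t y) < 1" using sa by simp
      qed
      show ?thesis using le iff sa True by (simp add: p P_def F_def)
    next
      case False
      then have xiR: "norm \<xi> > R" by simp
      have gxp: "0 < g0 (norm \<xi>)" using g0_ge[of "norm \<xi>"] by simp
      have gxl: "g0 (norm \<xi>) \<le> norm \<xi>" using g0_le[OF xiR] .
      have Fbig: "c * norm \<xi> \<le> norm (F y)" for y
      proof -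
        have "c ^ n * norm \<xi> \<le> norm (F y)"
          using TS.F_growth[OF tau_smooth tau_per nn_unit Rg xiR] R1 by (simp add: F_def c_def \<gamma>_def)
        moreover have "c \<le> c ^ n" using c1 n1 by (metis power_increasing power_one_right less_imp_le)
        ultimately show ?thesis by (meson mult_right_mono norm_ge_zero order_trans)
      qed
      have xc: "1 * norm \<xi> < c * norm \<xi>" using c1 xiR R1 by (intro mult_strict_right_mono) auto
      have FR: "norm (F y) > R" for y using Fbig[of y] xiR xc by simp
      have t_le: "t y \<le> c powr (2 * s)" for y
      proof -
        have "c * R \<le> c * norm \<xi>" using xiR c1 by (intro mult_left_mono) auto
        then have "(gamma_exp T + 1) / 2 * R \<le> norm (F y)" using Fbig[of y] cRe by linarith
        then have gF: "g0 (norm (F y)) = norm (F y)" by (rule g0_high)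
        have xp: "0 < norm \<xi>" using xiR R1 by linarith
        have "c \<le> norm (F y) / norm \<xi>" using Fbig[of y] xp by (simp add: le_divide_eq)
        also have "\<dots> \<le> norm (F y) / g0 (norm \<xi>)" using gxp gxl xp by (intro divide_left_mono) auto
        finally have "c \<le> g0 (norm (F y)) / g0 (norm \<xi>)" using gF by simp
        then show ?thesis unfolding t_def using s2 c1 by (intro powr_mono2') auto
      qed
      have le: "(\<Sum>y\<in>P. a y * t y) \<le> (\<Sum>y\<in>P. a y * c powr (2 * s))"
        by (rule sum_mono) (use apos t_le in \<open>simp add: less_imp_le mult_left_mono\<close>)
      also have "\<dots> = c powr (2 * s)" using sa by (simp add: sum_distrib_right[symmetric])
      finally have le2: "(\<Sum>y\<in>P. a y * t y) \<le> c powr (2 * s)" .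
      obtain y0 where "y0 \<in> P" using Pne by blast
      then have ex: "\<exists>y\<in>P. norm (F y) > R" using FR by blast
      show ?thesis using le2 cpow ex by (simp add: p P_def F_def)
    qed
  qed
  show ?thesis using main cpow by (simp add: c_def \<gamma>_def)
qed


end
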